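(* For all $0 \leqslant j \leqslant e-1$ and all $0\leqslant s <\alpha_{j+1}$, the tableau $T^{(s+1)}_j$ is a semistandard hook-valued tableau.
   Context: Tableaux are drawn in French notation. A semistandard Young tableau $U$ of hook shape consists of a hook entry $\mathsf{H}(U)=x$ in the corner, a leg $\mathsf{L}(U)=(\ell_1<\dots<\ell_p)$ stacked above $x$ (strictly increasing upward, $\ell_1>x$) and an arm $\mathsf{A}(U)=(a_1\leqslant\dots\leqslant a_q)$ to the right of $x$ (weakly increasing, $a_1\geqslant x$); arm and leg may be empty. The extended leg is $\mathsf{L}^+(U)=(x,\ell_1,\dots,\ell_p)$. A (semistandard) hook-valued tableau of shape $\lambda$ is a filling of the Young diagram of $\lambda$ with such hook tableaux so that $\max(A)\leqslant\min(B)$ when the cell containing $A$ is left of the cell containing $B$ in the same row, and $\max(A)<\min(C)$ when the cell containing $A$ is below the cell containing $C$ in the same column. For a cell $(r,c)$ (row $r$, column $c$) of a hook-valued tableau $h$ write $\mathsf{H}_h(r,c),\mathsf{L}_h(r,c),\mathsf{L}^+_h(r,c),\mathsf{A}_h(r,c)$ for the hook entry, leg, extended leg and arm of the entry in that cell. A set-valued tableau is a hook-valued tableau all of whose arms are empty. A column-flagged increasing tableau of shape $\mu/\lambda$ (with $\lambda\subseteq\mu$ having the same number of rows) is a filling of the cells of $\mu/\lambda$ with positive integers, strictly increasing along rows and columns, such that entries in column $i$ are at most $i-1$. Let $S$ be a set-valued tableau of shape $\mu$ and $F$ a column-flagged increasing tableau of shape $\mu/\lambda$ with $e$ entries. For a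 cell $(r,c)$ of $F$ with entry $F(r,c)$ its destination column is $d(r,c)=c-F(r,c)$. The crowding order lists the cells of $F$ as $(r_1,c_1),\dots,(r_e,c_e)$, ordered first by destination column (smallest to largest) and then by column index (largest to smallest); set $\alpha_i=F(r_i,c_i)$. Crowding bumping: let $h$ be a hook-valued tableau and $(r,c)$ a cell with $c>1$ and at most one element in $\mathsf{A}_h(r,c)$; if $\mathsf{A}_h(r,c)$ is empty, require $(r,c)$ to be a corner cell. Then $\mathcal{C}_b([h,(r,c)])$ is computed by: (1) If $\mathsf{A}_h(r,c)$ is nonempty, let $m$ be its only element and $b=\max\{x\in\mathsf{L}^+_h(r,c)\mid x\leqslant m\}$; otherwise let $m=\mathsf{H}_h(r,c)$ and $b=\max(\mathsf{L}^+_h(r,c))$. (2) Find the largest $r'$ with $\mathsf{H}_h(r',c-1)\leqslant b$. If $r'=r$ set $q=\mathsf{H}_h(r,c)$, otherwise $q=b$. Append $q$ to $\mathsf{A}_h(r',c-1)$. (3a) If $r'=r$: (i) if $\mathsf{A}_h(r,c)$ is nonempty, move $\{x\in\mathsf{L}_h(r,c)\mid q<x\leqslant m\}$ from $\mathsf{L}_h(r,c)$ into $\mathsf{L}_h(r',c-1)$ (keeping it strictly increasing), remove $m$ from $\mathsf{A}_h(r,c)$ and set $\mathsf{H}_h(r,c)=m$; (ii) otherwise move $\mathsf{L}_h(r,c)$ into $\mathsf{L}_h(r',c-1)$ (keeping it strictly increasing) and remove the cell $(r,c)$. (3b) If $r'\neq r$: (i) if $\mathsf{A}_h(r,c)$ is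 nonempty, replace $q$ in $\mathsf{L}^+_h(r,c)$ by $m$ and remove $m$ from $\mathsf{A}_h(r,c)$; (ii) otherwise remove the cell $(r,c)$. Writing $h'$ for the result, $\mathcal{C}_b([h,(r,c)])=[h',(r',c-1)]$, and $p_1$ denotes projection to $h'$. Define recursively, for $0\leqslant j\leqslant e-1$ and $0\leqslant s\leqslant\alpha_{j+1}$: $T^{(0)}_0=S$; $T^{(s)}_j=p_1\circ\mathcal{C}_b([T^{(s-1)}_j,(r_{j+1},c_{j+1})])$ for $s>0$, where $(r_{j+1},c_{j+1})$ here means the current cell obtained by iterating, i.e. $T^{(s)}_j$ is the first component of $\mathcal{C}_b^{\,s}([T^{(0)}_j,(r_{j+1},c_{j+1})])$; and $T^{(0)}_j=T^{(\alpha_j)}_{j-1}$ for $j>0$. (The hypotheses of the crowding bumping are satisfied at every step of this recursion, so all $T^{(s)}_j$ are defined as fillings with hook tableaux.) *)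

theory Defs
  imports Main "HOL-Library.Product_Lexorder"
begin

(* A hook tableau: hook entry H, leg L (stacked above H), arm A (to the right of H). *)
datatype hook = Hook (hk: nat) (leg: "nat list") (arm: "nat list")

definition ext_leg :: "hook \<Rightarrow> nat list" where
  "ext_leg U = hk U # leg U"

definition hentries :: "hook \<Rightarrow> nat set" where
  "hentries U = set (hk U # leg U @ arm U)"

definition hmin :: "hook \<Rightarrow> nat" where "hmin U = Min (hentries U)"
definition hmax :: "hook \<Rightarrow> nat" where "hmax U = Max (hentries U)"

definition valid_hook :: "hook \<Rightarrow> bool" where
  "valid_hook U \<longleftrightarrow> 0 < hk U
     \<and> sorted_wrt (<) (leg U) \<and> (\<forall>l\<in>set (leg U). hk U < l)
     \<and> sorted (arm U) \<and> (\<forall>a\<in>set (arm U). hk U \<le> a)"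

(* cells (r,c): row r, column c, both 1-indexed; French notation, row 1 at the bottom *)
type_synonym cell = "nat \<times> nat"
type_synonym hvt = "cell \<Rightarrow> hook option"

definition partition :: "nat list \<Rightarrow> bool" where
  "partition lam \<longleftrightarrow> sorted_wrt (\<ge>) lam \<and> (\<forall>p\<in>set lam. 0 < p)"

definition young :: "nat list \<Rightarrow> cell set" where
  "young lam = {(r,c). 1 \<le> r \<and> r \<le> length lam \<and> 1 \<le> c \<and> c \<le> lam ! (r - 1)}"

definition hvt_of_shape :: "nat list \<Rightarrow> hvt \<Rightarrow> bool" where
  "hvt_of_shape lam h \<longleftrightarrow> partition lam \<and> dom h = young lam
     \<and> (\<forall>p\<in>dom h. valid_hook (the (h p)))
     \<and> (\<forall>r c c'. (r,c) \<in> dom h \<and> (r,c') \<in> dom h \<and> c < c'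
          \<longrightarrow> hmax (the (h (r,c))) \<le> hmin (the (h (r,c'))))
     \<and> (\<forall>r r' c. (r,c) \<in> dom h \<and> (r',c) \<in> dom h \<and> r < r'
          \<longrightarrow> hmax (the (h (r,c))) < hmin (the (h (r',c))))"

definition is_hvt :: "hvt \<Rightarrow> bool" where
  "is_hvt h \<longleftrightarrow> (\<exists>lam. hvt_of_shape lam h)"

definition set_valued_of_shape :: "nat list \<Rightarrow> hvt \<Rightarrow> bool" where
  "set_valued_of_shape lam h \<longleftrightarrow> hvt_of_shape lam h \<and> (\<forall>p\<in>dom h. arm (the (h p)) = [])"

definition skew :: "nat list \<Rightarrow> nat list \<Rightarrow> cell set" where
  "skew mu lam = young mu - young lam"

definition col_flagged_incr :: "nat list \<Rightarrow> nat list \<Rightarrow> (cell \<Rightarrow> nat) \<Rightarrow> bool" where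
  "col_flagged_incr mu lam F \<longleftrightarrow>
     (\<forall>(r,c)\<in>skew mu lam. 0 < F (r,c) \<and> F (r,c) \<le> c - 1)
   \<and> (\<forall>r c c'. (r,c) \<in> skew mu lam \<and> (r,c') \<in> skew mu lam \<and> c < c' \<longrightarrow> F (r,c) < F (r,c'))
   \<and> (\<forall>r r' c. (r,c) \<in> skew mu lam \<and> (r',c) \<in> skew mu lam \<and> r < r' \<longrightarrow> F (r,c) < F (r',c))"

(* crowding order: by destination column c - F(r,c) ascending, then column descending *)
definition crowding_order :: "nat list \<Rightarrow> nat list \<Rightarrow> (cell \<Rightarrow> nat) \<Rightarrow> cell list" where
  "crowding_order mu lam F =
     sort_key (\<lambda>(r,c). (int c - int (F (r,c)), - int c)) (sorted_list_of_set (skew mu lam))"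

definition crowd_bump :: "hvt \<times> cell \<Rightarrow> hvt \<times> cell" where
  "crowd_bump hc = (case hc of (h, (r,c)) \<Rightarrow>
     let U = the (h (r,c)); x = hk U; L = leg U; A = arm U; Lp = ext_leg U;
         m = (if A \<noteq> [] then hd A else x);
         b = (if A \<noteq> [] then Max {y \<in> set Lp. y \<le> m} else Max (set Lp));
         r' = (GREATEST r'. (r', c - 1) \<in> dom h \<and> hk (the (h (r', c - 1))) \<le> b);
         q = (if r' = r then x else b);
         V = the (h (r', c - 1));
         V1 = Hook (hk V) (leg V) (arm V @ [q]);
         h1 = h((r', c - 1) := Some V1);
         h' = (if r' = r then
                 (if A \<noteq> [] then
                    let moved = filter (\<lambda>y. q < y \<and> y \<le> m) L;
                        kept = filter (\<lambda>y. \<not> (q < y \<and> y \<le> m)) L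
                    in h1((r', c - 1) := Some (Hook (hk V1) (sort (leg V1 @ moved)) (arm V1)),
                          (r, c) := Some (Hook m kept (remove1 m A)))
                  else
                    h1((r', c - 1) := Some (Hook (hk V1) (sort (leg V1 @ L)) (arm V1)),
                       (r, c) := None))
               else
                 (if A \<noteq> [] then
                    let Lp' = map (\<lambda>y. if y = q then m else y) Lp
                    in h1((r, c) := Some (Hook (hd Lp') (tl Lp') (remove1 m A)))
                  else h1((r, c) := None)))
     in (h', (r', c - 1)))"

primrec T_start :: "hvt \<Rightarrow> cell list \<Rightarrow> (cell \<Rightarrow> nat) \<Rightarrow> nat \<Rightarrow> hvt" where
  "T_start S ol F 0 = S"
| "T_start S ol F (Suc j) = fst ((crowd_bump ^^ F (ol ! j)) (T_start S ol F j, ol ! j))"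

(* T_j^{(s)}, with j 0-indexed and (r_{j+1},c_{j+1}) = ol ! j *)
definition T_seq :: "hvt \<Rightarrow> cell list \<Rightarrow> (cell \<Rightarrow> nat) \<Rightarrow> nat \<Rightarrow> nat \<Rightarrow> hvt" where
  "T_seq S ol F j s = fst ((crowd_bump ^^ s) (T_start S ol F j, ol ! j))"

end

theory Submission
  imports Defs
begin

definition ent :: "hvt \<Rightarrow> cell \<Rightarrow> nat set" where
  "ent h p = hentries (the (h p))"

definition downcl :: "cell set \<Rightarrow> bool" where
  "downcl D \<longleftrightarrow> (\<forall>r c. (r,c) \<in> D \<longrightarrow> 1 \<le> r \<and> 1 \<le> c \<and>
      (\<forall>r' c'. 1 \<le> r' \<longrightarrow> r' \<le> r \<longrightarrow> 1 \<le> c' \<longrightarrow> c' \<le> c \<longrightarrow> (r',c') \<in> D))"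

definition sst :: "hvt \<Rightarrow> bool" where
  "sst h \<longleftrightarrow> finite (dom h) \<and> downcl (dom h) \<and> (\<forall>p\<in>dom h. valid_hook (the (h p)))
    \<and> (\<forall>r c. (r,c) \<in> dom h \<longrightarrow> (r,Suc c) \<in> dom h \<longrightarrow> (\<forall>a\<in>ent h (r,c). \<forall>b\<in>ent h (r,Suc c). a \<le> b))
    \<and> (\<forall>r c. (r,c) \<in> dom h \<longrightarrow> (Suc r,c) \<in> dom h \<longrightarrow> (\<forall>a\<in>ent h (r,c). \<forall>b\<in>ent h (Suc r,c). a < b))"

lemma downcl_pos: "downcl D \<Longrightarrow> (r,c) \<in> D \<Longrightarrow> 1 \<le> r \<and> 1 \<le> c"
  unfolding downcl_def by blast

lemma downcl_down: "downcl D \<Longrightarrow> (r,c) \<in> D \<Longrightarrow> 1 \<le> r' \<Longrightarrow> r' \<le> r \<Longrightarrow> 1 \<le> c' \<Longrightarrow> c' \<le> c \<Longrightarrow> (r',c') \<in> D"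
  unfolding downcl_def by blast

lemma hentries_alt: "hentries U = set (ext_leg U) \<union> set (arm U)"
  by (auto simp: hentries_def ext_leg_def)

lemma hk_in_hentries[simp]: "hk U \<in> hentries U"
  by (simp add: hentries_def)

lemma finite_hentries[simp]: "finite (hentries U)"
  by (simp add: hentries_def)

lemma valid_hook_alt: "valid_hook U \<longleftrightarrow> 0 < hk U \<and> sorted_wrt (<) (ext_leg U) \<and> sorted (arm U)
   \<and> (\<forall>a\<in>set (arm U). hk U \<le> a)"
  by (auto simp: valid_hook_def ext_leg_def)

lemma valid_hook_min: "valid_hook U \<Longrightarrow> y \<in> hentries U \<Longrightarrow> hk U \<le> y"
  by (auto simp: valid_hook_def hentries_def)

lemma valid_hook_pos: "valid_hook U \<Longrightarrow> y \<in> hentries U \<Longrightarrow> 0 < y"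
  using valid_hook_min[of U y] by (auto simp: valid_hook_def)

lemma sst_valid: "sst h \<Longrightarrow> p \<in> dom h \<Longrightarrow> valid_hook (the (h p))"
  by (simp add: sst_def)

lemma sst_downcl: "sst h \<Longrightarrow> (r,c) \<in> dom h \<Longrightarrow> 1 \<le> r' \<Longrightarrow> r' \<le> r \<Longrightarrow> 1 \<le> c' \<Longrightarrow> c' \<le> c \<Longrightarrow> (r',c') \<in> dom h"
  unfolding sst_def downcl_def by blast

lemma sst_pos: "sst h \<Longrightarrow> (r,c) \<in> dom h \<Longrightarrow> 1 \<le> r \<and> 1 \<le> c"
  unfolding sst_def downcl_def by blast

lemma sst_row: assumes "sst h" "(r,c) \<in> dom h" "(r,c') \<in> dom h" "c < c'"
  "a \<in> ent h (r,c)" "b \<in> ent h (r,c')" shows "a \<le> b"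
  using assms(3,4,6)
proof (induction c' arbitrary: b)
  case 0 then show ?case by simp
next
  case (Suc c'')
  show ?case
  proof (cases "c = c''")
    case True
    then show ?thesis using assms(1,2,5) Suc.prems unfolding sst_def by blast
  next
    case False
    have c1: "1 \<le> c" using sst_pos[OF assms(1,2)] by simp
    have d: "(r,c'') \<in> dom h" using sst_downcl[OF assms(1) Suc.prems(1), of r c''] sst_pos[OF assms(1,2)] Suc.prems(2) by simp
    have "a \<le> hk (the (h (r,c'')))" using Suc.IH[OF d] False Suc.prems by (simp add: ent_def)
    moreover have "hk (the (h (r,c''))) \<le> b" using assms(1) d Suc.prems unfolding sst_def ent_def by simp
    ultimately show ?thesis by simp
  qed
qed

lemma sst_col: assumes "sst h" "(r,c) \<in> dom h" "(r',c) \<in> dom h" "r < r'"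
  "a \<in> ent h (r,c)" "b \<in> ent h (r',c)" shows "a < b"
  using assms(3,4,6)
proof (induction r' arbitrary: b)
  case 0 then show ?case by simp
next
  case (Suc r'')
  show ?case
  proof (cases "r = r''")
    case True
    then show ?thesis using assms(1,2,5) Suc.prems unfolding sst_def by blast
  next
    case False
    have d: "(r'',c) \<in> dom h" using sst_downcl[OF assms(1) Suc.prems(1), of r'' c] sst_pos[OF assms(1,2)] Suc.prems(2) by simp
    have "a < hk (the (h (r'',c)))" using Suc.IH[OF d] False Suc.prems by (simp add: ent_def)
    moreover have "hk (the (h (r'',c))) < b" using assms(1) d Suc.prems unfolding sst_def ent_def by simp
    ultimately show ?thesis by simp
  qed
qed

lemma hmax_le_hmin: "(\<forall>a\<in>hentries A. \<forall>b\<in>hentries B. a \<le> b) \<Longrightarrow> hmax A \<le> hmin B"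
  unfolding hmax_def hmin_def
  by (metis Max_in Min_in empty_iff finite_hentries hk_in_hentries)

lemma hmax_less_hmin: "(\<forall>a\<in>hentries A. \<forall>b\<in>hentries B. a < b) \<Longrightarrow> hmax A < hmin B"
  unfolding hmax_def hmin_def
  by (metis Max_in Min_in empty_iff finite_hentries hk_in_hentries)

lemma interval_set: assumes "finite S" "0 \<notin> S" "\<forall>c\<in>S. \<forall>c'. 1 \<le> c' \<longrightarrow> c' \<le> c \<longrightarrow> c' \<in> S"
  shows "S = {1..card S}"
proof (cases "S = {}")
  case True then show ?thesis by simp
next
  case False
  have "S = {1..Max S}"
  proof
    show "S \<subseteq> {1..Max S}" using assms(1,2) False by (auto simp: Suc_le_eq intro: Max_ge)
    show "{1..Max S} \<subseteq> S" using assms(3) Max_in[OF assms(1) False] by auto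
  qed
  then show ?thesis by (metis card_atLeastAtMost diff_Suc_1)
qed

lemma sst_is_hvt: assumes "sst h" shows "is_hvt h"
proof -
  define D where "D = dom h"
  have fin: "finite D" and dc: "downcl D" using assms by (auto simp: sst_def D_def)
  define row where "row r = {c. (r,c) \<in> D}" for r
  define R where "R = card {r. (r,1) \<in> D}"
  define lam where "lam = map (\<lambda>i. card (row (Suc i))) [0..<R]"
  have finrow: "finite (row r)" for r
  proof -
    have "row r \<subseteq> snd ` D" by (force simp: row_def)
    then show ?thesis using fin finite_subset by blast
  qed
  have rowI: "row r = {1..card (row r)}" for r
  proof (rule interval_set[OF finrow])
    show "0 \<notin> row r" using downcl_pos[OF dc] unfolding row_def by fastforce
    show "\<forall>c\<in>row r. \<forall>c'. 1 \<le> c' \<longrightarrow> c' \<le> c \<longrightarrow> c' \<in> row r"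
    proof (intro ballI allI impI)
      fix c c' assume "c \<in> row r" "1 \<le> c'" "c' \<le> c"
      then have "(r,c) \<in> D" by (simp add: row_def)
      then have "(r,c') \<in> D" using downcl_down[OF dc] downcl_pos[OF dc] \<open>1 \<le> c'\<close> \<open>c' \<le> c\<close> by blast
      then show "c' \<in> row r" by (simp add: row_def)
    qed
  qed
  have col1: "{r. (r,1) \<in> D} = {1..R}"
    unfolding R_def
  proof (rule interval_set)
    have "{r. (r,1) \<in> D} \<subseteq> fst ` D" by force
    then show "finite {r. (r,1) \<in> D}" using fin finite_subset by blast
    show "0 \<notin> {r. (r,1) \<in> D}" using downcl_pos[OF dc] by fastforce
    show "\<forall>c\<in>{r. (r, 1) \<in> D}. \<forall>c'. 1 \<le> c' \<longrightarrow> c' \<le> c \<longrightarrow> c' \<in> {r. (r, 1) \<in> D}"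
    proof (intro ballI allI impI)
      fix c c' assume "c \<in> {r. (r, 1) \<in> D}" "1 \<le> c'" "c' \<le> c"
      then show "c' \<in> {r. (r, 1) \<in> D}" using downcl_down[OF dc, of c 1 c' 1] by simp
    qed
  qed
  have memD: "(r,c) \<in> D \<longleftrightarrow> 1 \<le> r \<and> r \<le> R \<and> 1 \<le> c \<and> c \<le> card (row r)" for r c
  proof
    assume a: "(r,c) \<in> D"
    then have "(r,1) \<in> D" using downcl_down[OF dc a, of r 1] downcl_pos[OF dc a] by simp
    then have "r \<in> {1..R}" using col1 by blast
    moreover have "c \<in> row r" using a by (simp add: row_def)
    ultimately show "1 \<le> r \<and> r \<le> R \<and> 1 \<le> c \<and> c \<le> card (row r)" using rowI[of r] by auto
  next
    assume "1 \<le> r \<and> r \<le> R \<and> 1 \<le> c \<and> c \<le> card (row r)"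
    then have "c \<in> row r" using rowI[of r] by auto
    then show "(r,c) \<in> D" by (simp add: row_def)
  qed
  have rowpos: "1 \<le> r \<Longrightarrow> r \<le> R \<Longrightarrow> 0 < card (row r)" for r
  proof -
    assume "1 \<le> r" "r \<le> R"
    then have "(r,1) \<in> D" using col1 by auto
    then show ?thesis using memD by auto
  qed
  have rowmono: "1 \<le> r \<Longrightarrow> r \<le> r' \<Longrightarrow> r' \<le> R \<Longrightarrow> card (row r') \<le> card (row r)" for r r'
  proof -
    assume a: "1 \<le> r" "r \<le> r'" "r' \<le> R"
    have "(r', card (row r')) \<in> D" using memD a rowpos[of r'] by auto
    then have "(r, card (row r')) \<in> D" using downcl_down[OF dc, of r' "card (row r')" r "card (row r')"] a rowpos[of r'] by simp
    then show ?thesis using memD by auto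
  qed
  have part: "partition lam"
    unfolding partition_def lam_def
    apply (auto simp: sorted_wrt_iff_nth_less)
     apply (rule rowmono; simp)
    apply (rule rowpos; simp)
    done
  have young: "young lam = D"
    unfolding young_def lam_def using memD by (auto simp: nth_map)
  have "hvt_of_shape lam h"
    unfolding hvt_of_shape_def
  proof (intro conjI)
    show "partition lam" by fact
    show "dom h = young lam" using young D_def by simp
    show "\<forall>p\<in>dom h. valid_hook (the (h p))" using assms sst_def by blast
    show "\<forall>r c c'. (r, c) \<in> dom h \<and> (r, c') \<in> dom h \<and> c < c' \<longrightarrow> hmax (the (h (r, c))) \<le> hmin (the (h (r, c')))"
      using sst_row[OF assms] by (metis ent_def hmax_le_hmin)
    show "\<forall>r r' c. (r, c) \<in> dom h \<and> (r', c) \<in> dom h \<and> r < r' \<longrightarrow> hmax (the (h (r, c))) < hmin (the (h (r', c)))"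
      using sst_col[OF assms] by (metis ent_def hmax_less_hmin)
  qed
  then show ?thesis by (auto simp: is_hvt_def)
qed


definition bval :: "hook \<Rightarrow> nat" where
  "bval U = (if arm U \<noteq> [] then Max {y \<in> set (ext_leg U). y \<le> hd (arm U)} else Max (set (ext_leg U)))"

definition rnew :: "hvt \<Rightarrow> cell \<Rightarrow> nat" where
  "rnew h p = (GREATEST r'. (r', snd p - 1) \<in> dom h \<and> hk (the (h (r', snd p - 1))) \<le> bval (the (h p)))"

definition qnew :: "hvt \<Rightarrow> cell \<Rightarrow> nat" where
  "qnew h p = (if rnew h p = fst p then hk (the (h p)) else bval (the (h p)))"

lemma cb_snd: "snd (crowd_bump (h,(r,c))) = (rnew h (r,c), c - 1)"
  by (simp add: crowd_bump_def Let_def rnew_def bval_def)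

lemma cb_S_eq:
  assumes "arm (the (h (r,c))) = []" "rnew h (r,c) = r"
  shows "fst (crowd_bump (h,(r,c))) = h((r,c-1) := Some (Hook (hk (the (h (r,c-1))))
            (sort (leg (the (h (r,c-1))) @ leg (the (h (r,c))))) (arm (the (h (r,c-1))) @ [hk (the (h (r,c)))])),
          (r,c) := None)"
  using assms unfolding rnew_def bval_def by (simp add: crowd_bump_def Let_def)

lemma cb_S_ne:
  assumes "arm (the (h (r,c))) = []" "rnew h (r,c) \<noteq> r"
  shows "fst (crowd_bump (h,(r,c))) = h((rnew h (r,c),c-1) := Some (Hook (hk (the (h (rnew h (r,c),c-1))))
            (leg (the (h (rnew h (r,c),c-1)))) (arm (the (h (rnew h (r,c),c-1))) @ [bval (the (h (r,c)))])),
          (r,c) := None)"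
  using assms unfolding rnew_def bval_def by (simp add: crowd_bump_def Let_def)

lemma cb_M_eq:
  assumes "arm (the (h (r,c))) = [m]" "rnew h (r,c) = r"
  shows "fst (crowd_bump (h,(r,c))) = h((r,c-1) := Some (Hook (hk (the (h (r,c-1))))
            (sort (leg (the (h (r,c-1))) @ filter (\<lambda>y. hk (the (h (r,c))) < y \<and> y \<le> m) (leg (the (h (r,c))))))
            (arm (the (h (r,c-1))) @ [hk (the (h (r,c)))])),
          (r,c) := Some (Hook m (filter (\<lambda>y. \<not> (hk (the (h (r,c))) < y \<and> y \<le> m)) (leg (the (h (r,c))))) []))"
  using assms unfolding rnew_def bval_def by (simp add: crowd_bump_def Let_def)

lemma cb_M_ne:
  assumes "arm (the (h (r,c))) = [m]" "rnew h (r,c) \<noteq> r"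
  shows "fst (crowd_bump (h,(r,c))) = h((rnew h (r,c),c-1) := Some (Hook (hk (the (h (rnew h (r,c),c-1))))
            (leg (the (h (rnew h (r,c),c-1)))) (arm (the (h (rnew h (r,c),c-1))) @ [bval (the (h (r,c)))])),
          (r,c) := Some (Hook (hd (map (\<lambda>y. if y = bval (the (h (r,c))) then m else y) (ext_leg (the (h (r,c))))))
                 (tl (map (\<lambda>y. if y = bval (the (h (r,c))) then m else y) (ext_leg (the (h (r,c)))))) []))"
  using assms unfolding rnew_def bval_def by (simp add: crowd_bump_def Let_def assms(1) cong: if_cong)

definition le_all :: "nat set \<Rightarrow> nat set \<Rightarrow> bool" where
  "le_all A B \<longleftrightarrow> (\<forall>a\<in>A. \<forall>b\<in>B. a \<le> b)"
definition lt_all :: "nat set \<Rightarrow> nat set \<Rightarrow> bool" where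
  "lt_all A B \<longleftrightarrow> (\<forall>a\<in>A. \<forall>b\<in>B. a < b)"

lemma le_all_Un: "le_all (A \<union> B) C \<longleftrightarrow> le_all A C \<and> le_all B C" "le_all A (B \<union> C) \<longleftrightarrow> le_all A B \<and> le_all A C"
  by (auto simp: le_all_def)
lemma lt_all_Un: "lt_all (A \<union> B) C \<longleftrightarrow> lt_all A C \<and> lt_all B C" "lt_all A (B \<union> C) \<longleftrightarrow> lt_all A B \<and> lt_all A C"
  by (auto simp: lt_all_def)

lemma ent_upd_same[simp]: "ent (h(p := Some X)) p = hentries X"
  by (simp add: ent_def)
lemma ent_upd_other[simp]: "p' \<noteq> p \<Longrightarrow> ent (h(p := v)) p' = ent h p'"
  by (simp add: ent_def)

lemma sst_local:
  assumes "sst h" "finite (dom h')" "downcl (dom h')"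
    and same: "\<forall>p. p \<notin> C \<longrightarrow> h' p = h p"
    and val: "\<forall>p\<in>C. p \<in> dom h' \<longrightarrow> valid_hook (the (h' p))"
    and nb: "\<forall>i j. (i,j) \<in> C \<longrightarrow> (i,j) \<in> dom h' \<longrightarrow>
      (\<forall>j'. Suc j' = j \<longrightarrow> (i,j') \<in> dom h' \<longrightarrow> le_all (ent h' (i,j')) (ent h' (i,j)))
    \<and> ((i,Suc j) \<in> dom h' \<longrightarrow> le_all (ent h' (i,j)) (ent h' (i,Suc j)))
    \<and> (\<forall>i'. Suc i' = i \<longrightarrow> (i',j) \<in> dom h' \<longrightarrow> lt_all (ent h' (i',j)) (ent h' (i,j)))
    \<and> ((Suc i,j) \<in> dom h' \<longrightarrow> lt_all (ent h' (i,j)) (ent h' (Suc i,j)))"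
  shows "sst h'"
proof -
  have same': "p \<notin> C \<Longrightarrow> h' p = h p" for p using same by blast
  have domeq: "p \<notin> C \<Longrightarrow> (p \<in> dom h') = (p \<in> dom h)" for p using same'[of p] by (simp add: domIff)
  have enteq: "p \<notin> C \<Longrightarrow> ent h' p = ent h p" for p using same'[of p] by (simp add: ent_def)
  have v: "\<forall>p\<in>dom h'. valid_hook (the (h' p))"
  proof
    fix p assume "p \<in> dom h'"
    then show "valid_hook (the (h' p))"
      using val same'[of p] domeq[of p] sst_valid[OF assms(1), of p] by (cases "p \<in> C") auto
  qed
  have rw: "\<forall>i j. (i,j) \<in> dom h' \<longrightarrow> (i,Suc j) \<in> dom h' \<longrightarrow> (\<forall>a\<in>ent h' (i,j). \<forall>b\<in>ent h' (i,Suc j). a \<le> b)"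
  proof (intro allI impI)
    fix i j assume a: "(i,j) \<in> dom h'" "(i,Suc j) \<in> dom h'"
    show "\<forall>a\<in>ent h' (i,j). \<forall>b\<in>ent h' (i,Suc j). a \<le> b"
    proof (cases "(i,j) \<in> C")
      case True then show ?thesis using nb a unfolding le_all_def by blast
    next
      case F1: False
      show ?thesis
      proof (cases "(i,Suc j) \<in> C")
        case True then show ?thesis using nb a unfolding le_all_def by blast
      next
        case False
        then show ?thesis using F1 a domeq enteq assms(1) unfolding sst_def by metis
      qed
    qed
  qed
  have cl: "\<forall>i j. (i,j) \<in> dom h' \<longrightarrow> (Suc i,j) \<in> dom h' \<longrightarrow> (\<forall>a\<in>ent h' (i,j). \<forall>b\<in>ent h' (Suc i,j). a < b)"
  proof (intro allI impI)
    fix i j assume a: "(i,j) \<in> dom h'" "(Suc i,j) \<in> dom h'"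
    show "\<forall>a\<in>ent h' (i,j). \<forall>b\<in>ent h' (Suc i,j). a < b"
    proof (cases "(i,j) \<in> C")
      case True then show ?thesis using nb a unfolding lt_all_def by blast
    next
      case F1: False
      show ?thesis
      proof (cases "(Suc i,j) \<in> C")
        case True then show ?thesis using nb a unfolding lt_all_def by blast
      next
        case False
        then show ?thesis using F1 a domeq enteq assms(1) unfolding sst_def by metis
      qed
    qed
  qed
  show ?thesis unfolding sst_def using assms(2,3) v rw cl by blast
qed

lemma downcl_remove_corner:
  assumes "downcl D" "(Suc r, c) \<notin> D" "(r, Suc c) \<notin> D"
  shows "downcl (D - {(r,c)})"
  unfolding downcl_def
proof (intro allI impI conjI)
  fix r1 c1 assume a: "(r1,c1) \<in> D - {(r,c)}"
  then show "1 \<le> r1" "1 \<le> c1" using downcl_pos[OF assms(1)] by auto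
  fix r2 c2 assume b: "1 \<le> r2" "r2 \<le> r1" "1 \<le> c2" "c2 \<le> c1"
  have "(r2,c2) \<in> D" using downcl_down[OF assms(1)] a b by blast
  moreover have "(r2,c2) \<noteq> (r,c)"
  proof
    assume e: "(r2,c2) = (r,c)"
    show False
    proof (cases "r1 = r")
      case True
      then have "c < c1" using a b e by auto
      then have "(r, Suc c) \<in> D" using downcl_down[OF assms(1), of r1 c1 r "Suc c"] a b e True by auto
      then show False using assms(3) by simp
    next
      case False
      then have "r < r1" using b e by auto
      then have "(Suc r, c) \<in> D" using downcl_down[OF assms(1), of r1 c1 "Suc r" c] a b e by auto
      then show False using assms(2) by simp
    qed
  qed
  ultimately show "(r2,c2) \<in> D - {(r,c)}" by simp
qed


locale stp =
  fixes h :: hvt and r c :: nat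
  assumes ss: "sst h" and inD: "(r,c) \<in> dom h" and c2: "2 \<le> c"
    and mode: "(arm (the (h (r,c))) = [] \<and> (Suc r, c) \<notin> dom h \<and> (r, Suc c) \<notin> dom h)
               \<or> (\<exists>m. arm (the (h (r,c))) = [m])"
begin

abbreviation "UU \<equiv> the (h (r,c))"
abbreviation "xx \<equiv> hk UU"
abbreviation "bb \<equiv> bval UU"
abbreviation "rr \<equiv> rnew h (r,c)"
abbreviation "VV \<equiv> the (h (rr, c - 1))"
abbreviation "qq \<equiv> qnew h (r,c)"

lemma validU: "valid_hook UU" using sst_valid[OF ss inD] .

lemma cm1: "Suc (c - 1) = c" using c2 by simp

lemma left_in: "(r, c - 1) \<in> dom h"
  using sst_downcl[OF ss inD, of r "c - 1"] sst_pos[OF ss inD] c2 by simp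

lemma x_in: "xx \<in> ent h (r,c)" by (simp add: ent_def)

lemma ext_leg_ne: "set (ext_leg UU) \<noteq> {}" by (simp add: ext_leg_def)

lemma x_in_ext: "xx \<in> set (ext_leg UU)" by (simp add: ext_leg_def)

lemma ext_sub_ent: "set (ext_leg UU) \<subseteq> ent h (r,c)"
  by (simp add: ent_def hentries_alt)

lemma arm_ge_x: "a \<in> set (arm UU) \<Longrightarrow> xx \<le> a"
  using validU by (simp add: valid_hook_def)

lemma bS_eq: "arm UU = [] \<Longrightarrow> bb = Max (set (ext_leg UU))" by (simp add: bval_def)
lemma bM_eq: "arm UU = [m] \<Longrightarrow> bb = Max {y \<in> set (ext_leg UU). y \<le> m}" by (simp add: bval_def)

lemma b_props: "bb \<in> set (ext_leg UU) \<and> xx \<le> bb"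
proof (cases "arm UU = []")
  case True
  have "Max (set (ext_leg UU)) \<in> set (ext_leg UU)" by (rule Max_in) (auto simp: ext_leg_def)
  then show ?thesis using True bS_eq Max_ge[of "set (ext_leg UU)" xx] x_in_ext by auto
next
  case False
  then obtain m where m: "arm UU = [m]" using mode by auto
  have xm: "xx \<le> m" using arm_ge_x[of m] m by simp
  have ne: "xx \<in> {y \<in> set (ext_leg UU). y \<le> m}" using x_in_ext xm by simp
  have fin: "finite {y \<in> set (ext_leg UU). y \<le> m}" by simp
  have "Max {y \<in> set (ext_leg UU). y \<le> m} \<in> {y \<in> set (ext_leg UU). y \<le> m}"
    using Max_in[OF fin] ne by blast
  then show ?thesis using bM_eq[OF m] Max_ge[OF fin ne] by simp
qed

lemma b_in: "bb \<in> set (ext_leg UU)" using b_props by simp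
lemma x_le_b: "xx \<le> bb" using b_props by simp
lemma b_ent: "bb \<in> ent h (r,c)" using b_in ext_sub_ent by auto

lemma bS_max: "arm UU = [] \<Longrightarrow> y \<in> ent h (r,c) \<Longrightarrow> y \<le> bb"
  using bS_eq by (simp add: ent_def hentries_alt)

lemma bM_le: "arm UU = [m] \<Longrightarrow> bb \<le> m"
proof -
  assume m: "arm UU = [m]"
  have fin: "finite {y \<in> set (ext_leg UU). y \<le> m}" by simp
  have ne: "xx \<in> {y \<in> set (ext_leg UU). y \<le> m}" using x_in_ext arm_ge_x[of m] m by simp
  have "Max {y \<in> set (ext_leg UU). y \<le> m} \<in> {y \<in> set (ext_leg UU). y \<le> m}"
    using Max_in[OF fin] ne by blast
  then show ?thesis using bM_eq[OF m] by simp
qed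

lemma bM_max: "arm UU = [m] \<Longrightarrow> y \<in> set (ext_leg UU) \<Longrightarrow> y \<le> m \<Longrightarrow> y \<le> bb"
  using bM_eq[of m] by simp

lemma left_hk: "hk (the (h (r, c - 1))) \<le> bb"
proof -
  have "hk (the (h (r, c - 1))) \<le> xx"
    using sst_row[OF ss left_in inD, of "hk (the (h (r, c - 1)))" xx] c2 by (simp add: ent_def)
  then show ?thesis using x_le_b by simp
qed

lemma rows_bounded: "(i, j) \<in> dom h \<Longrightarrow> i \<le> Max (fst ` dom h)"
  using ss unfolding sst_def by (metis Max_ge finite_imageI fst_conv image_eqI)

lemma rr_props: "(rr, c - 1) \<in> dom h \<and> hk VV \<le> bb \<and> r \<le> rr"
proof -
  let ?P = "\<lambda>r'. (r', c - 1) \<in> dom h \<and> hk (the (h (r', c - 1))) \<le> bb"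
  have P: "?P r" using left_in left_hk by simp
  have bd: "\<And>y. ?P y \<Longrightarrow> y \<le> Max (fst ` dom h)" using rows_bounded by blast
  have e: "rr = Greatest ?P" by (simp add: rnew_def)
  show ?thesis using GreatestI_nat[of ?P r, OF P bd] Greatest_le_nat[of ?P r, OF P bd] e by simp
qed

lemma rr_in: "(rr, c - 1) \<in> dom h" using rr_props by simp
lemma hkV_le_b: "hk VV \<le> bb" using rr_props by simp
lemma r_le_rr: "r \<le> rr" using rr_props by simp

lemma rr_greatest: "(i, c - 1) \<in> dom h \<Longrightarrow> hk (the (h (i, c - 1))) \<le> bb \<Longrightarrow> i \<le> rr"
proof -
  assume a: "(i, c - 1) \<in> dom h" "hk (the (h (i, c - 1))) \<le> bb"
  let ?P = "\<lambda>r'. (r', c - 1) \<in> dom h \<and> hk (the (h (r', c - 1))) \<le> bb"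
  have bd: "\<And>y. ?P y \<Longrightarrow> y \<le> Max (fst ` dom h)" using rows_bounded by blast
  have e: "rr = Greatest ?P" by (simp add: rnew_def)
  show ?thesis using Greatest_le_nat[of ?P i, OF _ bd] a e by simp
qed

lemma above_gt: "(i, c - 1) \<in> dom h \<Longrightarrow> rr < i \<Longrightarrow> y \<in> ent h (i, c - 1) \<Longrightarrow> bb < y"
proof -
  assume a: "(i, c - 1) \<in> dom h" "rr < i" "y \<in> ent h (i, c - 1)"
  have "\<not> hk (the (h (i, c - 1))) \<le> bb" using rr_greatest[OF a(1)] a(2) by auto
  moreover have "hk (the (h (i, c - 1))) \<le> y"
    using valid_hook_min[OF sst_valid[OF ss a(1)]] a(3) by (simp add: ent_def)
  ultimately show ?thesis by simp
qed

lemma validV: "valid_hook VV" using sst_valid[OF ss rr_in] .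

lemma hkV_ent: "hk VV \<in> ent h (rr, c - 1)" by (simp add: ent_def)

lemma q_cases: "qq = (if rr = r then xx else bb)" by (simp add: qnew_def)

end


lemma valid_hook_Hook: "valid_hook (Hook x l a) \<longleftrightarrow> 0 < x \<and> sorted_wrt (<) l \<and> (\<forall>y\<in>set l. x < y) \<and> sorted a \<and> (\<forall>y\<in>set a. x \<le> y)"
  by (simp add: valid_hook_def)

lemma sorted_wrt_sort_distinct: "distinct xs \<Longrightarrow> sorted_wrt (<) (sort xs)"
  by (simp add: strict_sorted_iff)

lemma hentries_Hook: "hentries (Hook x l a) = insert x (set l \<union> set a)"
  by (auto simp: hentries_def)

lemma le_all_mono: "le_all A B \<Longrightarrow> A' \<subseteq> A \<Longrightarrow> B' \<subseteq> B \<Longrightarrow> le_all A' B'"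
  by (auto simp: le_all_def)
lemma lt_all_mono: "lt_all A B \<Longrightarrow> A' \<subseteq> A \<Longrightarrow> B' \<subseteq> B \<Longrightarrow> lt_all A' B'"
  by (auto simp: lt_all_def)
lemma le_all_insert: "le_all A (insert b B) \<longleftrightarrow> (\<forall>a\<in>A. a \<le> b) \<and> le_all A B"
  "le_all (insert a A) B \<longleftrightarrow> (\<forall>b\<in>B. a \<le> b) \<and> le_all A B"
  by (auto simp: le_all_def)
lemma lt_all_insert: "lt_all A (insert b B) \<longleftrightarrow> (\<forall>a\<in>A. a < b) \<and> lt_all A B"
  "lt_all (insert a A) B \<longleftrightarrow> (\<forall>b\<in>B. a < b) \<and> lt_all A B"
  by (auto simp: lt_all_def)

context stp begin

lemma cl: "c - 1 < c" using c2 by simp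

lemma row_le: "(i, j) \<in> dom h \<Longrightarrow> (i, j') \<in> dom h \<Longrightarrow> j < j' \<Longrightarrow> le_all (ent h (i,j)) (ent h (i,j'))"
  using sst_row[OF ss] unfolding le_all_def by blast
lemma col_lt: "(i, j) \<in> dom h \<Longrightarrow> (i', j) \<in> dom h \<Longrightarrow> i < i' \<Longrightarrow> lt_all (ent h (i,j)) (ent h (i',j))"
  using sst_col[OF ss] unfolding lt_all_def by blast
lemma hk_min: "p \<in> dom h \<Longrightarrow> y \<in> ent h p \<Longrightarrow> hk (the (h p)) \<le> y"
  using valid_hook_min[OF sst_valid[OF ss]] by (simp add: ent_def)
lemma hk_ent: "hk (the (h p)) \<in> ent h p" by (simp add: ent_def)

lemma rr_gt: "rr \<noteq> r \<Longrightarrow> r < rr" using r_le_rr by simp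

lemma S_ne:
  assumes a0: "arm UU = []" and e: "rr \<noteq> r" and armok: "\<forall>a\<in>set (arm VV). a \<le> bb"
  shows "sst (fst (crowd_bump (h,(r,c))))"
proof -
  have corner: "(Suc r, c) \<notin> dom h" "(r, Suc c) \<notin> dom h" using mode a0 by auto
  define A' where "A' = Hook (hk VV) (leg VV) (arm VV @ [bb])"
  define h' where "h' = h((rr,c-1) := Some A', (r,c) := None)"
  have h'eq: "fst (crowd_bump (h,(r,c))) = h'" using cb_S_ne[OF a0 e] by (simp add: h'_def A'_def)
  have ne: "(rr,c-1) \<noteq> (r,c)" using cl by simp
  have domh': "dom h' = dom h - {(r,c)}" using rr_in ne by (auto simp: h'_def)
  have EA: "hentries A' = insert bb (ent h (rr,c-1))"
    unfolding A'_def by (auto simp: hentries_def ent_def)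
  have rlt: "r < rr" using rr_gt[OF e] .
  have nrc: "(rr, c) \<notin> dom h"
  proof
    assume "(rr,c) \<in> dom h"
    then have "(Suc r, c) \<in> dom h" using sst_downcl[OF ss, of rr c "Suc r" c] rlt c2 by simp
    then show False using corner by simp
  qed
  have validA: "valid_hook A'"
    using validV armok hkV_le_b unfolding A'_def valid_hook_Hook by (simp add: valid_hook_def sorted_append)
  have h'A: "h' (rr,c-1) = Some A'" using ne by (simp add: h'_def)
  have E': "ent h' (rr,c-1) = insert bb (ent h (rr,c-1))" using h'A EA by (simp add: ent_def)
  have oth: "p \<noteq> (rr,c-1) \<Longrightarrow> p \<noteq> (r,c) \<Longrightarrow> ent h' p = ent h p" for p by (simp add: h'_def ent_def)
  have domo: "p \<noteq> (r,c) \<Longrightarrow> p \<in> dom h' \<longleftrightarrow> p \<in> dom h" for p using domh' by auto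
  show ?thesis unfolding h'eq
  proof (rule sst_local[OF ss, where C = "{(rr,c-1),(r,c)}"])
    show "finite (dom h')" using ss domh' by (simp add: sst_def)
    show "downcl (dom h')" using downcl_remove_corner[OF _ corner] ss domh' by (simp add: sst_def)
    show "\<forall>p. p \<notin> {(rr,c-1),(r,c)} \<longrightarrow> h' p = h p" by (simp add: h'_def)
    show "\<forall>p\<in>{(rr,c-1),(r,c)}. p \<in> dom h' \<longrightarrow> valid_hook (the (h' p))" using validA h'A domh' by auto
    show "\<forall>i j. (i,j) \<in> {(rr,c-1),(r,c)} \<longrightarrow> (i,j) \<in> dom h' \<longrightarrow>
      (\<forall>j'. Suc j' = j \<longrightarrow> (i,j') \<in> dom h' \<longrightarrow> le_all (ent h' (i,j')) (ent h' (i,j)))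
    \<and> ((i,Suc j) \<in> dom h' \<longrightarrow> le_all (ent h' (i,j)) (ent h' (i,Suc j)))
    \<and> (\<forall>i'. Suc i' = i \<longrightarrow> (i',j) \<in> dom h' \<longrightarrow> lt_all (ent h' (i',j)) (ent h' (i,j)))
    \<and> ((Suc i,j) \<in> dom h' \<longrightarrow> lt_all (ent h' (i,j)) (ent h' (Suc i,j)))"
    proof (intro allI impI)
      fix i j assume ij: "(i,j) \<in> {(rr,c-1),(r,c)}" "(i,j) \<in> dom h'"
      then have ij': "i = rr" "j = c-1" using domh' by auto
      show "(\<forall>j'. Suc j' = j \<longrightarrow> (i,j') \<in> dom h' \<longrightarrow> le_all (ent h' (i,j')) (ent h' (i,j)))
    \<and> ((i,Suc j) \<in> dom h' \<longrightarrow> le_all (ent h' (i,j)) (ent h' (i,Suc j)))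
    \<and> (\<forall>i'. Suc i' = i \<longrightarrow> (i',j) \<in> dom h' \<longrightarrow> lt_all (ent h' (i',j)) (ent h' (i,j)))
    \<and> ((Suc i,j) \<in> dom h' \<longrightarrow> lt_all (ent h' (i,j)) (ent h' (Suc i,j)))"
      proof (intro conjI allI impI)
        fix j' assume a: "Suc j' = j" "(i,j') \<in> dom h'"
        have jn: "(rr,j') \<noteq> (rr,c-1)" "(rr,j') \<noteq> (r,c)" using a ij' c2 by auto
        have d: "(rr,j') \<in> dom h" using a ij' domo jn by simp
        have jl: "j' < c - 1" using a ij' by simp
        have l1: "le_all (ent h (rr,j')) (ent h (rr,c-1))" using row_le[OF d rr_in jl] .
        have l2: "\<forall>y\<in>ent h (rr,j'). y \<le> bb"
          using l1 hk_ent[of "(rr,c-1)"] hkV_le_b unfolding le_all_def by (meson order_trans)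
        show "le_all (ent h' (i,j')) (ent h' (i,j))"
          unfolding ij' E' oth[OF jn] le_all_insert using l1 l2 by simp
      next
        assume a: "(i, Suc j) \<in> dom h'"
        have "(rr, c) \<noteq> (r,c)" using e by simp
        then have "(rr, c) \<notin> dom h'" using domo[of "(rr,c)"] nrc by simp
        then show "le_all (ent h' (i,j)) (ent h' (i,Suc j))" using a ij' cm1 by simp
      next
        fix i' assume a: "Suc i' = i" "(i',j) \<in> dom h'"
        have jn: "(i',c-1) \<noteq> (rr,c-1)" "(i',c-1) \<noteq> (r,c)" using a ij' c2 by auto
        have d: "(i',c-1) \<in> dom h" using a ij' domo jn by simp
        have l1: "lt_all (ent h (i',c-1)) (ent h (rr,c-1))" using col_lt[OF d rr_in] a ij' by simp
        have l2: "\<forall>y\<in>ent h (i',c-1). y < bb"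
          using l1 hk_ent[of "(rr,c-1)"] hkV_le_b unfolding lt_all_def by (meson order_less_le_trans)
        show "lt_all (ent h' (i',j)) (ent h' (i,j))" unfolding ij' E' lt_all_insert oth[OF jn] using l1 l2 by simp
      next
        assume a: "(Suc i, j) \<in> dom h'"
        have jn: "(Suc rr,c-1) \<noteq> (rr,c-1)" "(Suc rr,c-1) \<noteq> (r,c)" using c2 by auto
        have d: "(Suc rr,c-1) \<in> dom h" using a ij' domo jn by simp
        have l1: "lt_all (ent h (rr,c-1)) (ent h (Suc rr,c-1))" using col_lt[OF rr_in d] by simp
        have l2: "\<forall>y\<in>ent h (Suc rr,c-1). bb < y" using above_gt[OF d] by simp
        show "lt_all (ent h' (i,j)) (ent h' (Suc i,j))" unfolding ij' E' lt_all_insert oth[OF jn] using l1 l2 by simp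
      qed
    qed
  qed
qed

lemma S_eq:
  assumes a0: "arm UU = []" and e: "rr = r"
  shows "sst (fst (crowd_bump (h,(r,c))))"
proof -
  have corner: "(Suc r, c) \<notin> dom h" "(r, Suc c) \<notin> dom h" using mode a0 by auto
  define V where "V = the (h (r, c-1))"
  define A' where "A' = Hook (hk V) (sort (leg V @ leg UU)) (arm V @ [xx])"
  define h' where "h' = h((r,c-1) := Some A', (r,c) := None)"
  have h'eq: "fst (crowd_bump (h,(r,c))) = h'" using cb_S_eq[OF a0 e] by (simp add: h'_def A'_def V_def)
  have ne: "(r,c-1) \<noteq> (r,c)" using c2 by simp
  have domh': "dom h' = dom h - {(r,c)}" using left_in ne by (auto simp: h'_def)
  have EV: "ent h (r,c-1) = hentries V" by (simp add: ent_def V_def)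
  have EU: "ent h (r,c) = insert xx (set (leg UU))" using a0 by (simp add: ent_def hentries_def)
  have EA: "hentries A' = ent h (r,c-1) \<union> ent h (r,c)"
    unfolding EV EU A'_def by (auto simp: hentries_def)
  have cl: "c - 1 < c" using c2 by simp
  have rowVU: "a \<in> ent h (r,c-1) \<Longrightarrow> y \<in> ent h (r,c) \<Longrightarrow> a \<le> y" for a y
    using sst_row[OF ss left_in inD cl] by blast
  have vV: "valid_hook V" using sst_valid[OF ss left_in] V_def by simp
  have validA: "valid_hook A'"
  proof -
    have legV_le: "y \<in> set (leg V) \<Longrightarrow> y \<le> xx" for y using rowVU[of y xx] EV x_in by (simp add: hentries_def)
    have armV_le: "y \<in> set (arm V) \<Longrightarrow> y \<le> xx" for y using rowVU[of y xx] EV x_in by (simp add: hentries_def)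
    have legU_gt: "y \<in> set (leg UU) \<Longrightarrow> xx < y" for y using validU by (simp add: valid_hook_def)
    have d1: "distinct (leg V)" using vV by (simp add: valid_hook_def strict_sorted_iff)
    have d2: "distinct (leg UU)" using validU by (simp add: valid_hook_def strict_sorted_iff)
    have d3: "set (leg V) \<inter> set (leg UU) = {}" using legV_le legU_gt by fastforce
    have dist: "distinct (leg V @ leg UU)" using d1 d2 d3 by simp
    have hkVx: "hk V \<le> xx" using rowVU[of "hk V" xx] EV x_in by simp
    have s1: "sorted_wrt (<) (sort (leg V @ leg UU))" using sorted_wrt_sort_distinct[OF dist] .
    have s2: "\<forall>y\<in>set (sort (leg V @ leg UU)). hk V < y"
    proof
      fix y assume "y \<in> set (sort (leg V @ leg UU))"
      then have "y \<in> set (leg V) \<or> y \<in> set (leg UU)" by simp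
      then show "hk V < y"
      proof
        assume "y \<in> set (leg V)" then show ?thesis using vV by (simp add: valid_hook_def)
      next
        assume "y \<in> set (leg UU)" then show ?thesis using legU_gt[of y] hkVx by simp
      qed
    qed
    have s3: "sorted (arm V @ [xx])" using vV armV_le by (simp add: valid_hook_def sorted_append)
    have s4: "\<forall>y\<in>set (arm V @ [xx]). hk V \<le> y" using vV hkVx by (simp add: valid_hook_def)
    show ?thesis unfolding A'_def valid_hook_Hook
      using vV s1 s2 s3 s4 by (simp add: valid_hook_def)
  qed
  have h'A: "h' (r,c-1) = Some A'" using ne by (simp add: h'_def)
  have E': "ent h' (r,c-1) = ent h (r,c-1) \<union> ent h (r,c)" using h'A EA by (simp add: ent_def)
  have oth: "p \<noteq> (r,c-1) \<Longrightarrow> p \<noteq> (r,c) \<Longrightarrow> ent h' p = ent h p" for p by (simp add: h'_def ent_def)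
  have domo: "p \<noteq> (r,c) \<Longrightarrow> p \<in> dom h' \<longleftrightarrow> p \<in> dom h" for p using domh' by auto
  show ?thesis unfolding h'eq
  proof (rule sst_local[OF ss, where C = "{(r,c-1),(r,c)}"])
    show "finite (dom h')" using ss domh' by (simp add: sst_def)
    show "downcl (dom h')" using downcl_remove_corner[OF _ corner] ss domh' by (simp add: sst_def)
    show "\<forall>p. p \<notin> {(r,c-1),(r,c)} \<longrightarrow> h' p = h p" by (simp add: h'_def)
    show "\<forall>p\<in>{(r,c-1),(r,c)}. p \<in> dom h' \<longrightarrow> valid_hook (the (h' p))" using validA h'A domh' by auto
    show "\<forall>i j. (i,j) \<in> {(r,c-1),(r,c)} \<longrightarrow> (i,j) \<in> dom h' \<longrightarrow>
      (\<forall>j'. Suc j' = j \<longrightarrow> (i,j') \<in> dom h' \<longrightarrow> le_all (ent h' (i,j')) (ent h' (i,j)))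
    \<and> ((i,Suc j) \<in> dom h' \<longrightarrow> le_all (ent h' (i,j)) (ent h' (i,Suc j)))
    \<and> (\<forall>i'. Suc i' = i \<longrightarrow> (i',j) \<in> dom h' \<longrightarrow> lt_all (ent h' (i',j)) (ent h' (i,j)))
    \<and> ((Suc i,j) \<in> dom h' \<longrightarrow> lt_all (ent h' (i,j)) (ent h' (Suc i,j)))"
    proof (intro allI impI)
      fix i j assume ij: "(i,j) \<in> {(r,c-1),(r,c)}" "(i,j) \<in> dom h'"
      then have ij': "i = r" "j = c-1" using domh' by auto
      show "(\<forall>j'. Suc j' = j \<longrightarrow> (i,j') \<in> dom h' \<longrightarrow> le_all (ent h' (i,j')) (ent h' (i,j)))
    \<and> ((i,Suc j) \<in> dom h' \<longrightarrow> le_all (ent h' (i,j)) (ent h' (i,Suc j)))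
    \<and> (\<forall>i'. Suc i' = i \<longrightarrow> (i',j) \<in> dom h' \<longrightarrow> lt_all (ent h' (i',j)) (ent h' (i,j)))
    \<and> ((Suc i,j) \<in> dom h' \<longrightarrow> lt_all (ent h' (i,j)) (ent h' (Suc i,j)))"
      proof (intro conjI allI impI)
        fix j' assume a: "Suc j' = j" "(i,j') \<in> dom h'"
        have jn: "(r,j') \<noteq> (r,c-1)" "(r,j') \<noteq> (r,c)" using a ij' c2 by auto
        have d: "(r,j') \<in> dom h" using a ij' domo jn by simp
        show "le_all (ent h' (i,j')) (ent h' (i,j))"
          unfolding ij' E' le_all_Un oth[OF jn] using sst_row[OF ss d left_in] sst_row[OF ss d inD] a ij'
          by (auto simp: le_all_def)
      next
        assume "(i, Suc j) \<in> dom h'"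
        then show "le_all (ent h' (i,j)) (ent h' (i,Suc j))" using ij' cm1 domh' by simp
      next
        fix i' assume a: "Suc i' = i" "(i',j) \<in> dom h'"
        have jn: "(i',c-1) \<noteq> (r,c-1)" "(i',c-1) \<noteq> (r,c)" using a ij' c2 by auto
        have d: "(i',c-1) \<in> dom h" using a ij' domo jn by simp
        have l1: "lt_all (ent h (i',c-1)) (ent h (r,c-1))"
          using sst_col[OF ss d left_in] a ij' by (auto simp: lt_all_def)
        have l2: "lt_all (ent h (i',c-1)) (ent h (r,c))"
        proof -
          have "hk (the (h (r,c-1))) \<in> ent h (r,c-1)" by (simp add: ent_def)
          then show ?thesis using l1 rowVU unfolding lt_all_def by (meson order_less_le_trans)
        qed
        show "lt_all (ent h' (i',j)) (ent h' (i,j))" unfolding ij' E' lt_all_Un oth[OF jn] using l1 l2 by simp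
      next
        assume a: "(Suc i, j) \<in> dom h'"
        have jn: "(Suc r,c-1) \<noteq> (r,c-1)" "(Suc r,c-1) \<noteq> (r,c)" using c2 by auto
        have d: "(Suc r,c-1) \<in> dom h" using a ij' domo jn by simp
        have l1: "lt_all (ent h (r,c-1)) (ent h (Suc r,c-1))"
          using sst_col[OF ss left_in d] by (auto simp: lt_all_def)
        have l2: "lt_all (ent h (r,c)) (ent h (Suc r,c-1))"
          unfolding lt_all_def
        proof (intro ballI)
          fix a z assume "a \<in> ent h (r,c)" "z \<in> ent h (Suc r, c-1)"
          then have "a \<le> bb" "bb < z" using above_gt[OF d] e bS_max[OF a0] by auto
          then show "a < z" by simp
        qed
        show "lt_all (ent h' (i,j)) (ent h' (Suc i,j))" unfolding ij' E' lt_all_Un oth[OF jn] using l1 l2 by simp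
      qed
    qed
  qed
qed

end


context stp begin

lemma legU_gt: "y \<in> set (leg UU) \<Longrightarrow> xx < y" using validU by (simp add: valid_hook_def)

lemma M_eq:
  assumes am: "arm UU = [m]" and e: "rr = r"
  shows "sst (fst (crowd_bump (h,(r,c))))"
proof -
  define V where "V = the (h (r, c-1))"
  define mv where "mv = filter (\<lambda>y. xx < y \<and> y \<le> m) (leg UU)"
  define kept where "kept = filter (\<lambda>y. \<not> (xx < y \<and> y \<le> m)) (leg UU)"
  define A' where "A' = Hook (hk V) (sort (leg V @ mv)) (arm V @ [xx])"
  define B' where "B' = Hook m kept []"
  define h' where "h' = h((r,c-1) := Some A', (r,c) := Some B')"
  have h'eq: "fst (crowd_bump (h,(r,c))) = h'" using cb_M_eq[OF am e]
    by (simp add: h'_def A'_def B'_def V_def mv_def kept_def)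
  have ne: "(r,c-1) \<noteq> (r,c)" using c2 by simp
  have domh': "dom h' = dom h" using left_in inD by (auto simp: h'_def)
  have xm: "xx \<le> m" using arm_ge_x[of m] am by simp
  have EV: "ent h (r,c-1) = hentries V" by (simp add: ent_def V_def)
  have EU: "ent h (r,c) = insert xx (insert m (set (leg UU)))" using am by (auto simp: ent_def hentries_def)
  have mvset: "set mv = {y \<in> set (leg UU). y \<le> m}" using legU_gt by (auto simp: mv_def)
  have keptset: "set kept = {y \<in> set (leg UU). m < y}" using legU_gt by (auto simp: kept_def)
  have EA: "hentries A' = ent h (r,c-1) \<union> insert xx (set mv)"
    unfolding EV A'_def by (auto simp: hentries_def)
  have EB: "hentries B' = insert m (set kept)" unfolding B'_def by (auto simp: hentries_def)
  have EAsub: "hentries A' \<subseteq> ent h (r,c-1) \<union> ent h (r,c)" unfolding EA EU mvset by auto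
  have EBsub: "hentries B' \<subseteq> ent h (r,c)" unfolding EB EU keptset by auto
  have mv_le_b: "y \<in> insert xx (set mv) \<Longrightarrow> y \<le> bb" for y
    using bM_max[OF am, of y] x_le_b mvset by (auto simp: ext_leg_def)
  have rowVU: "le_all (ent h (r,c-1)) (ent h (r,c))" using row_le[OF left_in inD cl] .
  have AB: "le_all (hentries A') (hentries B')"
  proof -
    have "le_all (ent h (r,c-1)) (hentries B')" using le_all_mono[OF rowVU _ EBsub] by simp
    moreover have "le_all (insert xx (set mv)) (insert m (set kept))"
      unfolding le_all_def using xm mvset keptset legU_gt by fastforce
    ultimately show ?thesis unfolding EA EB le_all_Un by simp
  qed
  have vV: "valid_hook V" using sst_valid[OF ss left_in] V_def by simp
  have validA: "valid_hook A'"
  proof -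
    have legV_le: "y \<in> set (leg V) \<Longrightarrow> y \<le> xx" for y using rowVU x_in EV unfolding le_all_def by (simp add: hentries_def)
    have armV_le: "y \<in> set (arm V) \<Longrightarrow> y \<le> xx" for y using rowVU x_in EV unfolding le_all_def by (simp add: hentries_def)
    have hkVx: "hk V \<le> xx" using rowVU x_in EV unfolding le_all_def by simp
    have mv_gt: "y \<in> set mv \<Longrightarrow> xx < y" for y using mvset legU_gt by auto
    have d1: "distinct (leg V)" using vV by (simp add: valid_hook_def strict_sorted_iff)
    have d2: "distinct mv" using validU unfolding mv_def by (simp add: valid_hook_def strict_sorted_iff)
    have d3: "set (leg V) \<inter> set mv = {}" using legV_le mv_gt by fastforce
    have dist: "distinct (leg V @ mv)" using d1 d2 d3 by simp
    have s1: "sorted_wrt (<) (sort (leg V @ mv))" using sorted_wrt_sort_distinct[OF dist] .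
    have s2: "\<forall>y\<in>set (sort (leg V @ mv)). hk V < y"
    proof
      fix y assume "y \<in> set (sort (leg V @ mv))"
      then have "y \<in> set (leg V) \<or> y \<in> set mv" by simp
      then show "hk V < y"
      proof
        assume "y \<in> set (leg V)" then show ?thesis using vV by (simp add: valid_hook_def)
      next
        assume "y \<in> set mv" then show ?thesis using mv_gt[of y] hkVx by simp
      qed
    qed
    have s3: "sorted (arm V @ [xx])" using vV armV_le by (simp add: valid_hook_def sorted_append)
    have s4: "\<forall>y\<in>set (arm V @ [xx]). hk V \<le> y" using vV hkVx by (simp add: valid_hook_def)
    show ?thesis unfolding A'_def valid_hook_Hook
      using vV s1 s2 s3 s4 by (simp add: valid_hook_def)
  qed
  have validB: "valid_hook B'"
  proof -
    have "0 < m" using valid_hook_pos[OF validU, of m] am by (simp add: hentries_def)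
    moreover have "sorted_wrt (<) kept" using validU unfolding kept_def by (simp add: valid_hook_def sorted_wrt_filter)
    moreover have "\<forall>y\<in>set kept. m < y" using keptset by simp
    ultimately show ?thesis unfolding B'_def valid_hook_Hook by simp
  qed
  have h'A: "h' (r,c-1) = Some A'" using ne by (simp add: h'_def)
  have h'B: "h' (r,c) = Some B'" by (simp add: h'_def)
  have EA': "ent h' (r,c-1) = hentries A'" using h'A by (simp add: ent_def)
  have EB': "ent h' (r,c) = hentries B'" using h'B by (simp add: ent_def)
  have oth: "p \<noteq> (r,c-1) \<Longrightarrow> p \<noteq> (r,c) \<Longrightarrow> ent h' p = ent h p" for p by (simp add: h'_def ent_def)
  show ?thesis unfolding h'eq
  proof (rule sst_local[OF ss, where C = "{(r,c-1),(r,c)}"])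
    show "finite (dom h')" using ss domh' by (simp add: sst_def)
    show "downcl (dom h')" using ss domh' by (simp add: sst_def)
    show "\<forall>p. p \<notin> {(r,c-1),(r,c)} \<longrightarrow> h' p = h p" by (simp add: h'_def)
    show "\<forall>p\<in>{(r,c-1),(r,c)}. p \<in> dom h' \<longrightarrow> valid_hook (the (h' p))" using validA validB h'A h'B by auto
    show "\<forall>i j. (i,j) \<in> {(r,c-1),(r,c)} \<longrightarrow> (i,j) \<in> dom h' \<longrightarrow>
      (\<forall>j'. Suc j' = j \<longrightarrow> (i,j') \<in> dom h' \<longrightarrow> le_all (ent h' (i,j')) (ent h' (i,j)))
    \<and> ((i,Suc j) \<in> dom h' \<longrightarrow> le_all (ent h' (i,j)) (ent h' (i,Suc j)))
    \<and> (\<forall>i'. Suc i' = i \<longrightarrow> (i',j) \<in> dom h' \<longrightarrow> lt_all (ent h' (i',j)) (ent h' (i,j)))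
    \<and> ((Suc i,j) \<in> dom h' \<longrightarrow> lt_all (ent h' (i,j)) (ent h' (Suc i,j)))"
    proof (intro allI impI)
      fix i j assume ij: "(i,j) \<in> {(r,c-1),(r,c)}" "(i,j) \<in> dom h'"
      show "(\<forall>j'. Suc j' = j \<longrightarrow> (i,j') \<in> dom h' \<longrightarrow> le_all (ent h' (i,j')) (ent h' (i,j)))
    \<and> ((i,Suc j) \<in> dom h' \<longrightarrow> le_all (ent h' (i,j)) (ent h' (i,Suc j)))
    \<and> (\<forall>i'. Suc i' = i \<longrightarrow> (i',j) \<in> dom h' \<longrightarrow> lt_all (ent h' (i',j)) (ent h' (i,j)))
    \<and> ((Suc i,j) \<in> dom h' \<longrightarrow> lt_all (ent h' (i,j)) (ent h' (Suc i,j)))"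
      proof (cases "(i,j) = (r,c-1)")
        case True
        then have ij': "i = r" "j = c-1" by auto
        show ?thesis
        proof (intro conjI allI impI)
          fix j' assume a: "Suc j' = j" "(i,j') \<in> dom h'"
          have jn: "(r,j') \<noteq> (r,c-1)" "(r,j') \<noteq> (r,c)" using a ij' c2 by auto
          have d: "(r,j') \<in> dom h" using a ij' domh' by simp
          have jl: "j' < c - 1" using a ij' by simp
          have "le_all (ent h (r,j')) (ent h (r,c-1) \<union> ent h (r,c))"
            unfolding le_all_Un using row_le[OF d left_in jl] row_le[OF d inD] jl by simp
          then show "le_all (ent h' (i,j')) (ent h' (i,j))"
            unfolding ij' EA' oth[OF jn] using le_all_mono[OF _ _ EAsub] by blast
        next
          assume "(i, Suc j) \<in> dom h'"
          show "le_all (ent h' (i,j)) (ent h' (i,Suc j))" using AB ij' cm1 EA' EB' by simp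
        next
          fix i' assume a: "Suc i' = i" "(i',j) \<in> dom h'"
          have jn: "(i',c-1) \<noteq> (r,c-1)" "(i',c-1) \<noteq> (r,c)" using a ij' c2 by auto
          have d: "(i',c-1) \<in> dom h" using a ij' domh' by simp
          have l1: "lt_all (ent h (i',c-1)) (ent h (r,c-1))" using col_lt[OF d left_in] a ij' by simp
          have l2: "lt_all (ent h (i',c-1)) (ent h (r,c))"
            using l1 hk_ent[of "(r,c-1)"] rowVU unfolding lt_all_def le_all_def by (meson order_less_le_trans)
          have "lt_all (ent h (i',c-1)) (ent h (r,c-1) \<union> ent h (r,c))" using l1 l2 lt_all_Un by simp
          then show "lt_all (ent h' (i',j)) (ent h' (i,j))"
            unfolding ij' EA' oth[OF jn] using lt_all_mono[OF _ _ EAsub] by blast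
        next
          assume a: "(Suc i, j) \<in> dom h'"
          have jn: "(Suc r,c-1) \<noteq> (r,c-1)" "(Suc r,c-1) \<noteq> (r,c)" using c2 by auto
          have d: "(Suc r,c-1) \<in> dom h" using a ij' domh' by simp
          have l1: "lt_all (ent h (r,c-1)) (ent h (Suc r,c-1))" using col_lt[OF left_in d] by simp
          have l2: "lt_all (insert xx (set mv)) (ent h (Suc r,c-1))"
            unfolding lt_all_def
          proof (intro ballI)
            fix a z assume "a \<in> insert xx (set mv)" "z \<in> ent h (Suc r, c-1)"
            then have "a \<le> bb" "bb < z" using above_gt[OF d] e mv_le_b by auto
            then show "a < z" by simp
          qed
          show "lt_all (ent h' (i,j)) (ent h' (Suc i,j))" unfolding ij' EA' EA lt_all_Un oth[OF jn] using l1 l2 by simp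
        qed
      next
        case False
        then have ij': "i = r" "j = c" using ij by auto
        show ?thesis
        proof (intro conjI allI impI)
          fix j' assume a: "Suc j' = j" "(i,j') \<in> dom h'"
          then have "j' = c - 1" using ij' by simp
          then show "le_all (ent h' (i,j')) (ent h' (i,j))" using AB ij' EA' EB' by simp
        next
          assume a: "(i, Suc j) \<in> dom h'"
          have jn: "(r,Suc c) \<noteq> (r,c-1)" "(r,Suc c) \<noteq> (r,c)" by auto
          have d: "(r,Suc c) \<in> dom h" using a ij' domh' by simp
          show "le_all (ent h' (i,j)) (ent h' (i,Suc j))"
            unfolding ij' EB' oth[OF jn] using le_all_mono[OF row_le[OF inD d] EBsub] by simp
        next
          fix i' assume a: "Suc i' = i" "(i',j) \<in> dom h'"
          have jn: "(i',c) \<noteq> (r,c-1)" "(i',c) \<noteq> (r,c)" using a ij' c2 by auto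
          have d: "(i',c) \<in> dom h" using a ij' domh' by simp
          show "lt_all (ent h' (i',j)) (ent h' (i,j))"
            unfolding ij' EB' oth[OF jn] using lt_all_mono[OF col_lt[OF d inD] _ EBsub] a ij' by simp
        next
          assume a: "(Suc i, j) \<in> dom h'"
          have jn: "(Suc r,c) \<noteq> (r,c-1)" "(Suc r,c) \<noteq> (r,c)" by auto
          have d: "(Suc r,c) \<in> dom h" using a ij' domh' by simp
          show "lt_all (ent h' (i,j)) (ent h' (Suc i,j))"
            unfolding ij' EB' oth[OF jn] using lt_all_mono[OF col_lt[OF inD d] EBsub] by simp
        qed
      qed
    qed
  qed
qed

end


lemma valid_hook_hdtl: "l \<noteq> [] \<Longrightarrow> sorted_wrt (<) l \<Longrightarrow> 0 < hd l \<Longrightarrow> valid_hook (Hook (hd l) (tl l) [])"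
  by (cases l) (auto simp: valid_hook_def)

lemma hentries_hdtl: "l \<noteq> [] \<Longrightarrow> hentries (Hook (hd l) (tl l) []) = set l"
  by (cases l) (auto simp: hentries_def)

context stp begin

definition "ff m = (\<lambda>y. if y = bb then m else y)"

lemma Lp'_sorted:
  assumes am: "arm UU = [m]"
  shows "sorted_wrt (<) (map (ff m) (ext_leg UU))"
proof (rule sorted_wrt_map_mono)
  show "sorted_wrt (<) (ext_leg UU)" using validU by (simp add: valid_hook_alt)
  fix y z assume yz: "y \<in> set (ext_leg UU)" "z \<in> set (ext_leg UU)" "y < z"
  show "ff m y < ff m z"
  proof (cases "y = bb")
    case True
    have "z \<noteq> bb" using True yz by simp
    moreover have "m < z"
    proof (rule ccontr)
      assume "\<not> m < z"
      then have "z \<le> bb" using bM_max[OF am yz(2)] by simp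
      then show False using True yz by simp
    qed
    ultimately show ?thesis using True by (simp add: ff_def)
  next
    case False
    then show ?thesis using yz bM_le[OF am] by (auto simp: ff_def)
  qed
qed

lemma Lp'_set: "arm UU = [m] \<Longrightarrow> set (map (ff m) (ext_leg UU)) \<subseteq> ent h (r,c)"
  using ext_sub_ent by (auto simp: ff_def ent_def hentries_def)

lemma m_in_Lp': "m \<in> set (map (ff m) (ext_leg UU))"
  using b_in by (force simp: ff_def)

lemma M_ne:
  assumes am: "arm UU = [m]" and e: "rr \<noteq> r" and armok: "\<forall>a\<in>set (arm VV). a \<le> bb"
  shows "sst (fst (crowd_bump (h,(r,c))))"
proof -
  define Lp' where "Lp' = map (ff m) (ext_leg UU)"
  define A' where "A' = Hook (hk VV) (leg VV) (arm VV @ [bb])"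
  define B' where "B' = Hook (hd Lp') (tl Lp') []"
  define h' where "h' = h((rr,c-1) := Some A', (r,c) := Some B')"
  have h'eq: "fst (crowd_bump (h,(r,c))) = h'" using cb_M_ne[OF am e]
    by (simp add: h'_def A'_def B'_def Lp'_def ff_def)
  have ne: "(rr,c-1) \<noteq> (r,c)" using cl by simp
  have domh': "dom h' = dom h" using rr_in inD by (auto simp: h'_def)
  have rlt: "r < rr" using rr_gt[OF e] .
  have Lne: "Lp' \<noteq> []" by (simp add: Lp'_def ext_leg_def)
  have EA: "hentries A' = insert bb (ent h (rr,c-1))"
    unfolding A'_def by (auto simp: hentries_def ent_def)
  have EB: "hentries B' = set Lp'" unfolding B'_def using hentries_hdtl[OF Lne] .
  have EBsub: "hentries B' \<subseteq> ent h (r,c)" unfolding EB Lp'_def using Lp'_set[OF am] .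
  have validA: "valid_hook A'"
    using validV armok hkV_le_b unfolding A'_def valid_hook_Hook by (simp add: valid_hook_def sorted_append)
  have validB: "valid_hook B'"
  proof -
    have "hd Lp' \<in> ent h (r,c)" using EBsub EB Lne by (metis hd_in_set subsetD)
    then have "0 < hd Lp'" using valid_hook_pos[OF validU] by (simp add: ent_def)
    then show ?thesis unfolding B'_def using valid_hook_hdtl[OF Lne] Lp'_sorted[OF am] Lp'_def by simp
  qed
  have h'A: "h' (rr,c-1) = Some A'" using e by (simp add: h'_def)
  have h'B: "h' (r,c) = Some B'" by (simp add: h'_def)
  have EA': "ent h' (rr,c-1) = insert bb (ent h (rr,c-1))" using h'A EA by (simp add: ent_def)
  have EB': "ent h' (r,c) = hentries B'" using h'B by (simp add: ent_def)
  have oth: "p \<noteq> (rr,c-1) \<Longrightarrow> p \<noteq> (r,c) \<Longrightarrow> ent h' p = ent h p" for p by (simp add: h'_def ent_def)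
  show ?thesis unfolding h'eq
  proof (rule sst_local[OF ss, where C = "{(rr,c-1),(r,c)}"])
    show "finite (dom h')" using ss domh' by (simp add: sst_def)
    show "downcl (dom h')" using ss domh' by (simp add: sst_def)
    show "\<forall>p. p \<notin> {(rr,c-1),(r,c)} \<longrightarrow> h' p = h p" by (simp add: h'_def)
    show "\<forall>p\<in>{(rr,c-1),(r,c)}. p \<in> dom h' \<longrightarrow> valid_hook (the (h' p))" using validA validB h'A h'B by auto
    show "\<forall>i j. (i,j) \<in> {(rr,c-1),(r,c)} \<longrightarrow> (i,j) \<in> dom h' \<longrightarrow>
      (\<forall>j'. Suc j' = j \<longrightarrow> (i,j') \<in> dom h' \<longrightarrow> le_all (ent h' (i,j')) (ent h' (i,j)))
    \<and> ((i,Suc j) \<in> dom h' \<longrightarrow> le_all (ent h' (i,j)) (ent h' (i,Suc j)))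
    \<and> (\<forall>i'. Suc i' = i \<longrightarrow> (i',j) \<in> dom h' \<longrightarrow> lt_all (ent h' (i',j)) (ent h' (i,j)))
    \<and> ((Suc i,j) \<in> dom h' \<longrightarrow> lt_all (ent h' (i,j)) (ent h' (Suc i,j)))"
    proof (intro allI impI)
      fix i j assume ij: "(i,j) \<in> {(rr,c-1),(r,c)}" "(i,j) \<in> dom h'"
      show "(\<forall>j'. Suc j' = j \<longrightarrow> (i,j') \<in> dom h' \<longrightarrow> le_all (ent h' (i,j')) (ent h' (i,j)))
    \<and> ((i,Suc j) \<in> dom h' \<longrightarrow> le_all (ent h' (i,j)) (ent h' (i,Suc j)))
    \<and> (\<forall>i'. Suc i' = i \<longrightarrow> (i',j) \<in> dom h' \<longrightarrow> lt_all (ent h' (i',j)) (ent h' (i,j)))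
    \<and> ((Suc i,j) \<in> dom h' \<longrightarrow> lt_all (ent h' (i,j)) (ent h' (Suc i,j)))"
      proof (cases "(i,j) = (rr,c-1)")
        case True
        then have ij': "i = rr" "j = c-1" by auto
        show ?thesis
        proof (intro conjI allI impI)
          fix j' assume a: "Suc j' = j" "(i,j') \<in> dom h'"
          have jn: "(rr,j') \<noteq> (rr,c-1)" "(rr,j') \<noteq> (r,c)" using a ij' c2 by auto
          have d: "(rr,j') \<in> dom h" using a ij' domh' by simp
          have jl: "j' < c - 1" using a ij' by simp
          have l1: "le_all (ent h (rr,j')) (ent h (rr,c-1))" using row_le[OF d rr_in jl] .
          have l2: "\<forall>y\<in>ent h (rr,j'). y \<le> bb"
            using l1 hk_ent[of "(rr,c-1)"] hkV_le_b unfolding le_all_def by (meson order_trans)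
          show "le_all (ent h' (i,j')) (ent h' (i,j))"
            unfolding ij' EA' oth[OF jn] le_all_insert using l1 l2 by simp
        next
          assume a: "(i, Suc j) \<in> dom h'"
          have jn: "(rr,c) \<noteq> (rr,c-1)" "(rr,c) \<noteq> (r,c)" using e c2 by auto
          have d: "(rr,c) \<in> dom h" using a ij' cm1 domh' by simp
          have l1: "le_all (ent h (rr,c-1)) (ent h (rr,c))" using row_le[OF rr_in d cl] .
          have l2: "\<forall>z\<in>ent h (rr,c). bb \<le> z" using col_lt[OF inD d rlt] b_ent unfolding lt_all_def
            by (meson less_imp_le)
          show "le_all (ent h' (i,j)) (ent h' (i,Suc j))"
            unfolding ij' cm1 EA' oth[OF jn] le_all_insert using l1 l2 by simp
        next
          fix i' assume a: "Suc i' = i" "(i',j) \<in> dom h'"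
          have jn: "(i',c-1) \<noteq> (rr,c-1)" "(i',c-1) \<noteq> (r,c)" using a ij' c2 by auto
          have d: "(i',c-1) \<in> dom h" using a ij' domh' by simp
          have l1: "lt_all (ent h (i',c-1)) (ent h (rr,c-1))" using col_lt[OF d rr_in] a ij' by simp
          have l2: "\<forall>y\<in>ent h (i',c-1). y < bb"
            using l1 hk_ent[of "(rr,c-1)"] hkV_le_b unfolding lt_all_def by (meson order_less_le_trans)
          show "lt_all (ent h' (i',j)) (ent h' (i,j))" unfolding ij' EA' lt_all_insert oth[OF jn] using l1 l2 by simp
        next
          assume a: "(Suc i, j) \<in> dom h'"
          have jn: "(Suc rr,c-1) \<noteq> (rr,c-1)" "(Suc rr,c-1) \<noteq> (r,c)" using c2 by auto
          have d: "(Suc rr,c-1) \<in> dom h" using a ij' domh' by simp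
          have l1: "lt_all (ent h (rr,c-1)) (ent h (Suc rr,c-1))" using col_lt[OF rr_in d] by simp
          have l2: "\<forall>y\<in>ent h (Suc rr,c-1). bb < y" using above_gt[OF d] by simp
          show "lt_all (ent h' (i,j)) (ent h' (Suc i,j))" unfolding ij' EA' lt_all_insert oth[OF jn] using l1 l2 by simp
        qed
      next
        case False
        then have ij': "i = r" "j = c" using ij by auto
        show ?thesis
        proof (intro conjI allI impI)
          fix j' assume a: "Suc j' = j" "(i,j') \<in> dom h'"
          then have j': "j' = c - 1" using ij' by simp
          have jn: "(r,c-1) \<noteq> (rr,c-1)" "(r,c-1) \<noteq> (r,c)" using e c2 by auto
          show "le_all (ent h' (i,j')) (ent h' (i,j))"
            unfolding ij' j' EB' oth[OF jn] using le_all_mono[OF row_le[OF left_in inD cl] _ EBsub] by simp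
        next
          assume a: "(i, Suc j) \<in> dom h'"
          have jn: "(r,Suc c) \<noteq> (rr,c-1)" "(r,Suc c) \<noteq> (r,c)" using c2 by auto
          have d: "(r,Suc c) \<in> dom h" using a ij' domh' by simp
          show "le_all (ent h' (i,j)) (ent h' (i,Suc j))"
            unfolding ij' EB' oth[OF jn] using le_all_mono[OF row_le[OF inD d] EBsub] by simp
        next
          fix i' assume a: "Suc i' = i" "(i',j) \<in> dom h'"
          have jn: "(i',c) \<noteq> (rr,c-1)" "(i',c) \<noteq> (r,c)" using a ij' c2 by auto
          have d: "(i',c) \<in> dom h" using a ij' domh' by simp
          show "lt_all (ent h' (i',j)) (ent h' (i,j))"
            unfolding ij' EB' oth[OF jn] using lt_all_mono[OF col_lt[OF d inD] _ EBsub] a ij' by simp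
        next
          assume a: "(Suc i, j) \<in> dom h'"
          have jn: "(Suc r,c) \<noteq> (rr,c-1)" "(Suc r,c) \<noteq> (r,c)" using c2 by auto
          have d: "(Suc r,c) \<in> dom h" using a ij' domh' by simp
          show "lt_all (ent h' (i,j)) (ent h' (Suc i,j))"
            unfolding ij' EB' oth[OF jn] using lt_all_mono[OF col_lt[OF inD d] EBsub] by simp
        qed
      qed
    qed
  qed
qed

end


context stp begin

abbreviation "hh \<equiv> fst (crowd_bump (h,(r,c)))"

lemma step_snd: "snd (crowd_bump (h,(r,c))) = (rr, c - 1)" using cb_snd .

lemma step_other: "p \<noteq> (r,c) \<Longrightarrow> p \<noteq> (rr, c - 1) \<Longrightarrow> hh p = h p"
proof -
  assume a: "p \<noteq> (r,c)" "p \<noteq> (rr, c - 1)"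
  show ?thesis
  proof (cases "arm UU = []")
    case True
    then show ?thesis using a cb_S_eq[of h r c, OF True] cb_S_ne[of h r c, OF True] by (cases "rr = r") auto
  next
    case False
    then obtain m where m: "arm UU = [m]" using mode by auto
    then show ?thesis using a cb_M_eq[of h r c, OF m] cb_M_ne[of h r c, OF m] by (cases "rr = r") auto
  qed
qed

lemma step_A: "\<exists>L'. hh (rr, c - 1) = Some (Hook (hk VV) L' (arm VV @ [qq])) \<and> set (leg VV) \<subseteq> set L'"
proof -
  have ne: "(rr, c - 1) \<noteq> (r, c)" using cl by auto
  show ?thesis
  proof (cases "arm UU = []")
    case True
    show ?thesis
    proof (cases "rr = r")
      case e: True
      show ?thesis using cb_S_eq[OF True e] e ne q_cases by auto
    next
      case e: False
      show ?thesis using cb_S_ne[OF True e] e ne q_cases by auto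
    qed
  next
    case False
    then obtain m where m: "arm UU = [m]" using mode by auto
    show ?thesis
    proof (cases "rr = r")
      case e: True
      show ?thesis using cb_M_eq[OF m e] e ne q_cases by auto
    next
      case e: False
      show ?thesis using cb_M_ne[OF m e] e ne q_cases by auto
    qed
  qed
qed

lemma step_S_removed: "arm UU = [] \<Longrightarrow> hh (r,c) = None"
  using cb_S_eq[of h r c] cb_S_ne[of h r c] by (cases "rr = r") auto

lemma step_M_cell: assumes m: "arm UU = [m]"
  shows "\<exists>U'. hh (r,c) = Some U' \<and> arm U' = [] \<and> m \<in> set (ext_leg U')"
proof (cases "rr = r")
  case e: True
  show ?thesis using cb_M_eq[OF m e] by (simp add: ext_leg_def)
next
  case e: False
  have Lne: "map (ff m) (ext_leg UU) \<noteq> []" by (simp add: ext_leg_def)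
  have "hd (map (ff m) (ext_leg UU)) # tl (map (ff m) (ext_leg UU)) = map (ff m) (ext_leg UU)"
    using Lne by simp
  then have "m \<in> set (hd (map (ff m) (ext_leg UU)) # tl (map (ff m) (ext_leg UU)))"
    using m_in_Lp'[of m] by simp
  then show ?thesis using cb_M_ne[OF m e] by (simp add: ext_leg_def ff_def)
qed

lemma step_q_le_m: "arm UU = [m] \<Longrightarrow> qq \<le> m"
  using q_cases bM_le arm_ge_x[of m] x_le_b by (cases "rr = r") auto

lemma step_sst:
  assumes armok: "rr \<noteq> r \<Longrightarrow> \<forall>a\<in>set (arm VV). a \<le> bb"
  shows "sst hh"
proof (cases "arm UU = []")
  case True
  show ?thesis
  proof (cases "rr = r")
    case e: True show ?thesis using S_eq[OF True e] .
  next
    case e: False show ?thesis using S_ne[OF True e armok[OF e]] .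
  qed
next
  case False
  then obtain m where m: "arm UU = [m]" using mode by auto
  show ?thesis
  proof (cases "rr = r")
    case e: True show ?thesis using M_eq[OF m e] .
  next
    case e: False show ?thesis using M_ne[OF m e armok[OF e]] .
  qed
qed

lemma step_dom: "dom hh = (if arm UU = [] then dom h - {(r,c)} else dom h)"
proof -
  have A: "(rr, c - 1) \<in> dom hh" using step_A by auto
  have ne: "(rr, c - 1) \<noteq> (r, c)" using cl by auto
  show ?thesis
  proof (cases "arm UU = []")
    case True
    have "dom hh = dom h - {(r,c)}"
    proof (rule set_eqI)
      fix p show "p \<in> dom hh \<longleftrightarrow> p \<in> dom h - {(r,c)}"
      proof (cases "p = (r,c)")
        case True then show ?thesis using step_S_removed[OF \<open>arm UU = []\<close>] by (simp add: domIff)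
      next
        case F1: False
        show ?thesis
        proof (cases "p = (rr, c-1)")
          case True then show ?thesis using A rr_in F1 by simp
        next
          case False then show ?thesis using step_other[OF F1 False] F1 by (simp add: domIff)
        qed
      qed
    qed
    then show ?thesis using True by simp
  next
    case False
    then obtain m where m: "arm UU = [m]" using mode by auto
    have "dom hh = dom h"
    proof (rule set_eqI)
      fix p show "p \<in> dom hh \<longleftrightarrow> p \<in> dom h"
      proof (cases "p = (r,c)")
        case True then show ?thesis using step_M_cell[OF m] inD by (auto simp: domIff)
      next
        case F1: False
        show ?thesis
        proof (cases "p = (rr, c-1)")
          case True then show ?thesis using A rr_in F1 by simp
        next
          case False then show ?thesis using step_other[OF F1 False] by (simp add: domIff)
        qed
      qed
    qed
    then show ?thesis using False by simp
  qed
qed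

lemma compare:
  assumes rk: "(\<rho>k, c) \<in> dom h" "\<rho>k \<le> r" "q1 \<in> set (ext_leg (the (h (\<rho>k, c))))"
    and mq: "\<And>m. arm UU = [m] \<Longrightarrow> \<rho>k = r \<Longrightarrow> q1 \<le> m"
    and rk': "(\<rho>k', c - 1) \<in> dom h" "q1' \<in> ent h (\<rho>k', c - 1)" "q1' \<le> q1"
  shows "q1 \<le> bb" and "\<rho>k' \<le> rr" and "\<rho>k' = rr \<Longrightarrow> q1' \<le> qq"
proof -
  have q1ent: "q1 \<in> ent h (\<rho>k, c)" using rk(3) by (simp add: ent_def hentries_alt)
  show q1b: "q1 \<le> bb"
  proof (cases "\<rho>k = r")
    case True
    show ?thesis
    proof (cases "arm UU = []")
      case a0: True
      show ?thesis using bS_max[OF a0] q1ent True by simp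
    next
      case False
      then obtain m where m: "arm UU = [m]" using mode by auto
      show ?thesis using bM_max[OF m] rk(3) mq[OF m True] True by simp
    qed
  next
    case False
    then have "\<rho>k < r" using rk(2) by simp
    then have "q1 < xx" using sst_col[OF ss rk(1) inD _ q1ent x_in] by simp
    then show ?thesis using x_le_b by simp
  qed
  have "hk (the (h (\<rho>k', c - 1))) \<le> q1'" using hk_min[OF rk'(1,2)] .
  then have "hk (the (h (\<rho>k', c - 1))) \<le> bb" using rk'(3) q1b by simp
  then show "\<rho>k' \<le> rr" using rr_greatest[OF rk'(1)] by simp
  show "\<rho>k' = rr \<Longrightarrow> q1' \<le> qq"
  proof -
    assume e: "\<rho>k' = rr"
    show ?thesis
    proof (cases "rr = r")
      case True
      have e2: "\<rho>k' = r" using e True by simp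
      have "q1' \<le> xx" using sst_row[OF ss rk'(1)[unfolded e2] inD cl rk'(2)[unfolded e2] x_in] .
      then show ?thesis using q_cases True by simp
    next
      case False
      then show ?thesis using q_cases q1b rk'(3) by simp
    qed
  qed
qed

end


lemma young_downcl: assumes "partition lam" shows "downcl (young lam)"
  unfolding downcl_def
proof (intro allI impI conjI)
  fix r c assume a: "(r,c) \<in> young lam"
  then show "1 \<le> r" "1 \<le> c" by (auto simp: young_def)
  fix r' c' assume b: "1 \<le> r'" "r' \<le> r" "1 \<le> c'" "c' \<le> c"
  have "lam ! (r - 1) \<le> lam ! (r' - 1)"
  proof (cases "r' = r")
    case True then show ?thesis by simp
  next
    case False
    then have "r' - 1 < r - 1" using b by simp
    then show ?thesis using assms a unfolding partition_def young_def
      by (auto simp: sorted_wrt_iff_nth_less)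
  qed
  then show "(r',c') \<in> young lam" using a b by (auto simp: young_def)
qed

lemma young_finite: "finite (young lam)"
proof -
  have "young lam \<subseteq> {0..length lam} \<times> {0..sum_list lam}"
    by (auto simp: young_def intro!: order_trans[OF _ elem_le_sum_list])
  then show ?thesis using finite_subset by blast
qed

lemma young_mem: "(r,c) \<in> young lam \<longleftrightarrow> 1 \<le> r \<and> r \<le> length lam \<and> 1 \<le> c \<and> c \<le> lam ! (r - 1)"
  by (simp add: young_def)

locale proc =
  fixes mu lam :: "nat list" and S :: hvt and F :: "cell \<Rightarrow> nat"
  assumes pmu: "partition mu" and plam: "partition lam"
    and svS: "set_valued_of_shape mu S" and cfi: "col_flagged_incr mu lam F"
begin

abbreviation "ol \<equiv> crowding_order mu lam F"
abbreviation "sk \<equiv> skew mu lam"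
abbreviation "D0 j \<equiv> young mu - set (take j ol)"

definition key :: "cell \<Rightarrow> int \<times> int" where
  "key p = (int (snd p) - int (F p), - int (snd p))"

lemma key_eq: "(\<lambda>(r,c). (int c - int (F (r,c)), - int c)) = key"
  by (auto simp: key_def fun_eq_iff)

lemma ol_def': "ol = sort_key key (sorted_list_of_set sk)"
  unfolding crowding_order_def key_eq ..

lemma sk_finite: "finite sk" unfolding skew_def using young_finite by simp

lemma ol_set: "set ol = sk" unfolding ol_def' using sk_finite by simp
lemma ol_distinct: "distinct ol" unfolding ol_def' using sk_finite by simp
lemma ol_len: "length ol = card sk" using distinct_card[OF ol_distinct] ol_set by simp
lemma ol_sorted: "sorted (map key ol)" unfolding ol_def' by simp

lemma F_bounds: "(r,c) \<in> sk \<Longrightarrow> 0 < F (r,c) \<and> F (r,c) \<le> c - 1"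
  using cfi unfolding col_flagged_incr_def by blast

lemma F_row: "(r,c) \<in> sk \<Longrightarrow> (r,c') \<in> sk \<Longrightarrow> c < c' \<Longrightarrow> F (r,c) < F (r,c')"
  using cfi unfolding col_flagged_incr_def by blast

lemma F_col: "(r,c) \<in> sk \<Longrightarrow> (r',c) \<in> sk \<Longrightarrow> r < r' \<Longrightarrow> F (r,c) < F (r',c)"
  using cfi unfolding col_flagged_incr_def by blast

lemma sk_pos: "(r,c) \<in> sk \<Longrightarrow> 1 \<le> r \<and> 1 \<le> c"
  by (auto simp: skew_def young_def)

lemma key_fst: "p \<in> sk \<Longrightarrow> fst (key p) = int (snd p - F p)"
  using F_bounds[of "fst p" "snd p"] by (cases p) (auto simp: key_def)

lemma key_inj: assumes "p \<in> sk" "p' \<in> sk" "key p = key p'" shows "p = p'"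
proof -
  obtain r c r' c' where pp: "p = (r,c)" "p' = (r',c')" by (cases p, cases p')
  have cc: "c = c'" using assms(3) pp by (simp add: key_def)
  then have FF: "F (r,c) = F (r',c)" using assms(3) pp by (simp add: key_def)
  show ?thesis
  proof (rule ccontr)
    assume "p \<noteq> p'"
    then have "r < r' \<or> r' < r" using pp cc by auto
    then show False using F_col[of r c r'] F_col[of r' c r] assms pp cc FF by auto
  qed
qed

lemma ol_nth_sk: "i < length ol \<Longrightarrow> ol ! i \<in> sk" using ol_set nth_mem by blast

lemma ol_key_le: "i \<le> j \<Longrightarrow> j < length ol \<Longrightarrow> key (ol ! i) \<le> key (ol ! j)"
  using sorted_nth_mono[OF ol_sorted, of i j] by simp

lemma ol_key_less: "i < j \<Longrightarrow> j < length ol \<Longrightarrow> key (ol ! i) < key (ol ! j)"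
proof -
  assume a: "i < j" "j < length ol"
  have "key (ol ! i) \<le> key (ol ! j)" using ol_key_le a by simp
  moreover have "ol ! i \<noteq> ol ! j" using ol_distinct a nth_eq_iff_index_eq by fastforce
  then have "key (ol ! i) \<noteq> key (ol ! j)" using key_inj ol_nth_sk a by (meson order.strict_trans)
  ultimately show ?thesis by simp
qed

lemma ol_index: assumes "p \<in> sk" "key p < key (ol ! j)" "j < length ol" shows "p \<in> set (take j ol)"
proof -
  obtain i where i: "i < length ol" "ol ! i = p" using assms(1) ol_set by (metis in_set_conv_nth)
  have "i < j"
  proof (rule ccontr)
    assume "\<not> i < j"
    then have "j \<le> i" by simp
    then have "key (ol ! j) \<le> key (ol ! i)" using ol_key_le[of j i] i by simp
    then show False using assms(2) i by simp
  qed
  then show ?thesis using i by (metis in_set_conv_nth length_take min_less_iff_conj nth_take)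
qed

definition dst :: "cell \<Rightarrow> nat" where "dst p = snd p - F p"

lemma dst_pos: "p \<in> sk \<Longrightarrow> 1 \<le> dst p \<and> dst p < snd p"
  using F_bounds[of "fst p" "snd p"] by (cases p) (auto simp: dst_def)

lemma dst_mono: "i \<le> j \<Longrightarrow> j < length ol \<Longrightarrow> dst (ol ! i) \<le> dst (ol ! j)"
proof -
  assume a: "i \<le> j" "j < length ol"
  have "fst (key (ol ! i)) \<le> fst (key (ol ! j))" using ol_key_le[OF a]
    by (cases "key (ol ! i)", cases "key (ol ! j)") auto
  then show ?thesis using key_fst ol_nth_sk a by (simp add: dst_def)
qed

lemma same_dst_col: assumes "0 < j" "j < length ol" "dst (ol ! (j-1)) = dst (ol ! j)"
  shows "snd (ol ! j) < snd (ol ! (j-1))"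
proof -
  have l: "key (ol ! (j-1)) < key (ol ! j)" using ol_key_less assms by simp
  have "fst (key (ol ! (j-1))) = fst (key (ol ! j))"
    using key_fst ol_nth_sk assms by (simp add: dst_def)
  then have "snd (key (ol ! (j-1))) < snd (key (ol ! j))" using l
    by (cases "key (ol ! (j-1))", cases "key (ol ! j)") auto
  then show ?thesis by (simp add: key_def)
qed

lemma young_lam_dc: "downcl (young lam)" using young_downcl[OF plam] .
lemma young_mu_dc: "downcl (young mu)" using young_downcl[OF pmu] .

lemma corner:
  assumes j: "j < length ol" and p0: "ol ! j = (r0, c0)"
  shows "(Suc r0, c0) \<notin> D0 j" "(r0, Suc c0) \<notin> D0 j"
proof -
  have sk0: "(r0,c0) \<in> sk" using ol_nth_sk[OF j] p0 by simp
  then have nl: "(r0,c0) \<notin> young lam" and y0: "(r0,c0) \<in> young mu" by (auto simp: skew_def)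
  have pos: "1 \<le> r0" "1 \<le> c0" using sk_pos[OF sk0] by auto
  show "(Suc r0, c0) \<notin> D0 j"
  proof
    assume a: "(Suc r0, c0) \<in> D0 j"
    have "(Suc r0, c0) \<notin> young lam"
      using nl downcl_down[OF young_lam_dc, of "Suc r0" c0 r0 c0] pos by auto
    then have skp: "(Suc r0, c0) \<in> sk" using a by (simp add: skew_def)
    have "F (r0,c0) < F (Suc r0, c0)" using F_col[OF sk0 skp] by simp
    then have "key (Suc r0, c0) < key (ol ! j)"
      using F_bounds[OF sk0] F_bounds[OF skp] p0 by (simp add: key_def)
    then have "(Suc r0, c0) \<in> set (take j ol)" using ol_index[OF skp _ j] by simp
    then show False using a by simp
  qed
  show "(r0, Suc c0) \<notin> D0 j"
  proof
    assume a: "(r0, Suc c0) \<in> D0 j"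
    have "(r0, Suc c0) \<notin> young lam"
      using nl downcl_down[OF young_lam_dc, of r0 "Suc c0" r0 c0] pos by auto
    then have skp: "(r0, Suc c0) \<in> sk" using a by (simp add: skew_def)
    have "F (r0,c0) < F (r0, Suc c0)" using F_row[OF sk0 skp] by simp
    then have "key (r0, Suc c0) < key (ol ! j)"
      using F_bounds[OF sk0] F_bounds[OF skp] p0 by (simp add: key_def)
    then have "(r0, Suc c0) \<in> set (take j ol)" using ol_index[OF skp _ j] by simp
    then show False using a by simp
  qed
qed

lemma sstS: "sst S"
proof -
  have hs: "hvt_of_shape mu S" using svS by (simp add: set_valued_of_shape_def)
  have dom: "dom S = young mu" using hs by (simp add: hvt_of_shape_def)
  have row: "a \<le> b" if "(r,c) \<in> dom S" "(r,c') \<in> dom S" "c < c'" "a \<in> ent S (r,c)" "b \<in> ent S (r,c')" for r c c' a b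
  proof -
    have "hmax (the (S (r,c))) \<le> hmin (the (S (r,c')))" using hs that unfolding hvt_of_shape_def by blast
    moreover have "a \<le> hmax (the (S (r,c)))" using that(4) by (simp add: hmax_def ent_def)
    moreover have "hmin (the (S (r,c'))) \<le> b" using that(5) by (simp add: hmin_def ent_def)
    ultimately show ?thesis by simp
  qed
  have col: "a < b" if "(r,c) \<in> dom S" "(r',c) \<in> dom S" "r < r'" "a \<in> ent S (r,c)" "b \<in> ent S (r',c)" for r c r' a b
  proof -
    have "hmax (the (S (r,c))) < hmin (the (S (r',c)))" using hs that unfolding hvt_of_shape_def by blast
    moreover have "a \<le> hmax (the (S (r,c)))" using that(4) by (simp add: hmax_def ent_def)
    moreover have "hmin (the (S (r',c))) \<le> b" using that(5) by (simp add: hmin_def ent_def)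
    ultimately show ?thesis by simp
  qed
  show ?thesis unfolding sst_def
    using dom young_finite young_mu_dc hs row[of _ _ "Suc _"] col[of _ _ "Suc _"]
    unfolding hvt_of_shape_def by auto
qed

lemma armS: "p \<in> dom S \<Longrightarrow> arm (the (S p)) = []"
  using svS by (simp add: set_valued_of_shape_def)

end


definition TrOK :: "hvt \<Rightarrow> nat \<Rightarrow> nat \<Rightarrow> (nat \<Rightarrow> nat \<times> nat) \<Rightarrow> bool" where
  "TrOK h d k tp \<longleftrightarrow> (\<forall>jj. d \<le> jj \<and> jj \<le> k \<longrightarrow> (fst (tp jj), jj) \<in> dom h)
    \<and> (\<forall>jj. d < jj \<and> jj \<le> k \<longrightarrow> snd (tp jj) \<in> set (ext_leg (the (h (fst (tp jj), jj)))))
    \<and> (\<forall>jj. d \<le> jj \<and> jj < k \<longrightarrow> snd (tp jj) \<le> snd (tp (Suc jj)))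
    \<and> snd (tp d) \<in> ent h (fst (tp d), d)"

definition ColD :: "hvt \<Rightarrow> nat \<Rightarrow> cell \<Rightarrow> (nat \<times> nat) option \<Rightarrow> bool" where
  "ColD h d cur opt \<longleftrightarrow> (\<forall>i. (i,d) \<in> dom h \<and> (i,d) \<noteq> cur \<and> arm (the (h (i,d))) \<noteq> [] \<longrightarrow>
     (case opt of None \<Rightarrow> False | Some (\<rho>,q) \<Rightarrow> i \<le> \<rho> \<and> (i = \<rho> \<longrightarrow> (\<forall>a\<in>set (arm (the (h (i,d)))). a \<le> q))))"

definition OwnTr :: "hvt \<Rightarrow> nat \<Rightarrow> cell \<Rightarrow> nat \<Rightarrow> (nat \<Rightarrow> nat \<times> nat) \<Rightarrow> bool" where
  "OwnTr h c0 cur s tr \<longleftrightarrow> (0 < s \<longrightarrow> tr (snd cur) = (fst cur, last (arm (the (h cur)))))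
    \<and> (\<forall>jj. snd cur < jj \<and> jj < c0 \<longrightarrow> (fst (tr jj), jj) \<in> dom h \<and> snd (tr jj) \<in> set (ext_leg (the (h (fst (tr jj), jj)))))
    \<and> (\<forall>jj. snd cur \<le> jj \<and> Suc jj < c0 \<longrightarrow> snd (tr jj) \<le> snd (tr (Suc jj)))"

lemma sorted_le_last: "sorted xs \<Longrightarrow> a \<in> set xs \<Longrightarrow> a \<le> last xs"
proof -
  assume s: "sorted xs" and a: "a \<in> set xs"
  then have ne: "xs \<noteq> []" by auto
  have "xs = butlast xs @ [last xs]" using ne by simp
  then have "sorted (butlast xs @ [last xs])" using s by metis
  then have "\<forall>y\<in>set (butlast xs). y \<le> last xs" by (simp add: sorted_append)
  moreover have "a \<in> set (butlast xs) \<or> a = last xs" using a ne by (metis append_butlast_last_id butlast.simps(2) in_set_butlastD last_ConsL last_ConsR list.set_cases rotate1.simps(2) set_ConsD set_rotate1)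
  ultimately show ?thesis by auto
qed

lemma ext_leg_sub_hentries: "set (ext_leg U) \<subseteq> hentries U"
  by (auto simp: hentries_alt)

lemma OwnTr_0: "snd cur = c0 \<Longrightarrow> OwnTr h c0 cur 0 tr" by (auto simp: OwnTr_def)

context proc begin

definition PI :: "nat \<Rightarrow> nat \<Rightarrow> hvt \<times> cell \<Rightarrow> bool" where
  "PI j s st \<longleftrightarrow> (case st of (h, cur) \<Rightarrow>
     snd cur = snd (ol!j) - s \<and> sst h \<and> dom h = D0 j - (if s = 0 then {} else {ol!j}) \<and> cur \<in> dom h
   \<and> (s = 0 \<longrightarrow> cur = ol!j)
   \<and> (\<forall>i jj. (i,jj) \<in> dom h \<longrightarrow> dst (ol!j) < jj \<longrightarrow> (i,jj) \<noteq> cur \<longrightarrow> arm (the (h (i,jj))) = [])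
   \<and> (s = 0 \<longrightarrow> arm (the (h cur)) = [])
   \<and> (0 < s \<longrightarrow> arm (the (h cur)) \<noteq> [] \<and> (dst (ol!j) < snd cur \<longrightarrow> length (arm (the (h cur))) = 1))
   \<and> (\<exists>tr. OwnTr h (snd (ol!j)) cur s tr)
   \<and> (if 0 < j \<and> dst (ol!(j-1)) = dst (ol!j) then
        (\<exists>tp. TrOK h (dst (ol!j)) (snd cur) tp \<and> fst (tp (snd cur)) \<le> fst cur
           \<and> (0 < s \<and> fst cur = fst (tp (snd cur)) \<longrightarrow> snd (tp (snd cur)) \<le> last (arm (the (h cur))))
           \<and> ColD h (dst (ol!j)) cur (Some (tp (dst (ol!j)))))
      else ColD h (dst (ol!j)) cur None))"

lemma PI_sst: "PI j s (h, cur) \<Longrightarrow> sst h" by (simp add: PI_def)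

lemma PI_start0: assumes "0 < length ol" shows "PI 0 0 (S, ol!0)"
proof -
  have sk0: "ol ! 0 \<in> sk" using ol_nth_sk assms by simp
  have domS: "dom S = young mu" using svS by (simp add: set_valued_of_shape_def hvt_of_shape_def)
  have in0: "ol ! 0 \<in> dom S" using sk0 domS by (simp add: skew_def)
  have cd: "ColD S (dst (ol!0)) (ol!0) None" using armS by (simp add: ColD_def)
  have "OwnTr S (snd (ol ! 0)) (ol ! 0) 0 (\<lambda>_. (0,0))" by (rule OwnTr_0) simp
  then show ?thesis unfolding PI_def using sstS domS in0 armS cd by auto
qed

end


lemma nth_notin_take: "distinct xs \<Longrightarrow> i < length xs \<Longrightarrow> xs ! i \<notin> set (take i xs)"
proof
  assume d: "distinct xs" and i: "i < length xs" and m: "xs ! i \<in> set (take i xs)"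
  then obtain i' where i': "i' < length (take i xs)" "take i xs ! i' = xs ! i" by (metis in_set_conv_nth)
  then have "xs ! i' = xs ! i" "i' < i" using i by auto
  then show False using d i nth_eq_iff_index_eq by fastforce
qed

context proc begin

lemma PI_next:
  assumes j: "Suc j < length ol" and P: "PI j (F (ol!j)) (h, cur)"
  shows "PI (Suc j) 0 (h, ol ! Suc j)"
proof -
  obtain \<sigma> k where cur: "cur = (\<sigma>,k)" by (cases cur)
  define d where "d = dst (ol!j)"
  define d1 where "d1 = dst (ol ! Suc j)"
  define c1 where "c1 = snd (ol ! Suc j)"
  define r1 where "r1 = fst (ol ! Suc j)"
  have p1: "ol ! Suc j = (r1, c1)" by (simp add: r1_def c1_def)
  have jl: "j < length ol" using j by simp
  have sk0: "ol!j \<in> sk" and sk1: "ol ! Suc j \<in> sk" using ol_nth_sk j by auto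
  have al: "0 < F (ol!j)" using F_bounds sk0 by (cases "ol!j") auto
  have P': "snd cur = snd (ol!j) - F (ol!j) \<and> sst h \<and> dom h = D0 j - {ol!j} \<and> cur \<in> dom h
   \<and> (\<forall>i jj. (i,jj) \<in> dom h \<longrightarrow> dst (ol!j) < jj \<longrightarrow> (i,jj) \<noteq> cur \<longrightarrow> arm (the (h (i,jj))) = [])
   \<and> arm (the (h cur)) \<noteq> []
   \<and> (\<exists>tr. OwnTr h (snd (ol!j)) cur (F (ol!j)) tr)"
    using P al unfolding PI_def by auto
  have kk: "k = snd (ol!j) - F (ol!j)" and ss: "sst h" and domh: "dom h = D0 j - {ol!j}"
    and curin: "(\<sigma>,k) \<in> dom h"
    and arms: "\<And>i jj. (i,jj) \<in> dom h \<Longrightarrow> d < jj \<Longrightarrow> (i,jj) \<noteq> (\<sigma>,k) \<Longrightarrow> arm (the (h (i,jj))) = []"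
    and armne: "arm (the (h (\<sigma>,k))) \<noteq> []"
    using P' cur d_def by auto
  obtain tr where own: "OwnTr h (snd (ol!j)) (\<sigma>,k) (F (ol!j)) tr" using P' cur by auto
  have kd: "k = d" using kk by (simp add: d_def dst_def)
  have dd1: "d \<le> d1" using dst_mono[of j "Suc j"] j by (simp add: d_def d1_def)
  have d1c1: "d1 < c1" using dst_pos[OF sk1] by (simp add: d1_def c1_def)
  have D0S: "D0 (Suc j) = D0 j - {ol!j}" using take_Suc_conv_app_nth[OF jl] by auto
  have domh1: "dom h = D0 (Suc j)" using domh D0S by simp
  have in1: "ol ! Suc j \<in> dom h"
    using sk1 nth_notin_take[OF ol_distinct j] domh1 by (simp add: skew_def)
  have arms1: "\<forall>i jj. (i,jj) \<in> dom h \<longrightarrow> d1 < jj \<longrightarrow> (i,jj) \<noteq> ol ! Suc j \<longrightarrow> arm (the (h (i,jj))) = []"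
    using arms dd1 kd by auto
  have arm1: "arm (the (h (ol ! Suc j))) = []"
    using arms[of r1 c1] in1 p1 dd1 d1c1 kd by simp
  have own1: "OwnTr h (snd (ol ! Suc j)) (ol ! Suc j) 0 tr" by (rule OwnTr_0) simp
  have prev1: "if 0 < Suc j \<and> dst (ol!(Suc j - 1)) = dst (ol ! Suc j) then
        (\<exists>tp. TrOK h (dst (ol ! Suc j)) (snd (ol ! Suc j)) tp \<and> fst (tp (snd (ol ! Suc j))) \<le> fst (ol ! Suc j)
           \<and> (0 < (0::nat) \<and> fst (ol ! Suc j) = fst (tp (snd (ol ! Suc j))) \<longrightarrow> snd (tp (snd (ol ! Suc j))) \<le> last (arm (the (h (ol ! Suc j)))))
           \<and> ColD h (dst (ol ! Suc j)) (ol ! Suc j) (Some (tp (dst (ol ! Suc j)))))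
      else ColD h (dst (ol ! Suc j)) (ol ! Suc j) None"
  proof (cases "d = d1")
    case same: True
    have cc: "c1 < snd (ol ! j)" using same_dst_col[of "Suc j"] j same by (simp add: d_def d1_def c1_def)
    have tr_d: "tr d = (\<sigma>, last (arm (the (h (\<sigma>,d)))))" using own al kd unfolding OwnTr_def by simp
    have trOK: "TrOK h d1 c1 tr"
      unfolding TrOK_def
    proof (intro conjI allI impI)
      fix jj assume a: "d1 \<le> jj \<and> jj \<le> c1"
      show "(fst (tr jj), jj) \<in> dom h"
      proof (cases "jj = d")
        case True then show ?thesis using tr_d curin kd by simp
      next
        case False then show ?thesis using own a same cc kd unfolding OwnTr_def by auto
      qed
    next
      fix jj assume a: "d1 < jj \<and> jj \<le> c1"
      then show "snd (tr jj) \<in> set (ext_leg (the (h (fst (tr jj), jj))))"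
        using own same cc kd unfolding OwnTr_def by auto
    next
      fix jj assume a: "d1 \<le> jj \<and> jj < c1"
      then show "snd (tr jj) \<le> snd (tr (Suc jj))" using own same cc kd unfolding OwnTr_def by auto
    next
      show "snd (tr d1) \<in> ent h (fst (tr d1), d1)"
        using tr_d same armne kd by (simp add: ent_def hentries_def)
    qed
    have rowok: "fst (tr c1) \<le> r1"
    proof (rule ccontr)
      assume "\<not> fst (tr c1) \<le> r1"
      then have lt: "r1 < fst (tr c1)" by simp
      have "(fst (tr c1), c1) \<in> dom h" using trOK d1c1 unfolding TrOK_def by simp
      then have "(Suc r1, c1) \<in> dom h" using sst_downcl[OF ss, of "fst (tr c1)" c1 "Suc r1" c1] lt
        sk_pos[of r1 c1] sk1 p1 by simp
      then show False using corner(1)[OF j p1] domh1 by simp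
    qed
    have tr_d1: "tr d1 = (\<sigma>, last (arm (the (h (\<sigma>,d1)))))" using tr_d same by simp
    have cl: "i \<le> \<sigma> \<and> (i = \<sigma> \<longrightarrow> (\<forall>a\<in>set (arm (the (h (i, d1)))). a \<le> last (arm (the (h (\<sigma>,d1))))))"
      if a: "(i, d1) \<in> dom h" "(i, d1) \<noteq> (r1, c1)" "arm (the (h (i, d1))) \<noteq> []" for i
    proof (cases "i = \<sigma>")
      case True
      have "sorted (arm (the (h (\<sigma>,d1))))" using sst_valid[OF ss curin] same kd by (simp add: valid_hook_def)
      then show ?thesis using True sorted_le_last by auto
    next
      case False
      have prevj: "0 < j \<and> dst (ol!(j-1)) = d"
      proof (rule ccontr)
        assume np: "\<not> (0 < j \<and> dst (ol!(j-1)) = d)"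
        then have "ColD h d cur None" using P unfolding PI_def d_def by (auto split: if_splits)
        then show False using a False same cur kd unfolding ColD_def by auto
      qed
      then obtain tp where tp: "fst (tp (snd cur)) \<le> fst cur" "ColD h d cur (Some (tp d))"
        using P unfolding PI_def d_def by (auto split: if_splits)
      obtain \<rho> q where rq: "tp d = (\<rho>, q)" by (cases "tp d")
      have "i \<le> \<rho>" using tp(2) a False same cur kd rq unfolding ColD_def by auto
      moreover have "\<rho> \<le> \<sigma>" using tp(1) cur kd rq by simp
      ultimately show ?thesis using False by simp
    qed
    have cold: "ColD h d1 (r1,c1) (Some (tr d1))"
      unfolding ColD_def tr_d1 using cl by auto
    have E: "\<exists>tp. TrOK h d1 c1 tp \<and> fst (tp c1) \<le> r1 \<and> (0 < (0::nat) \<and> r1 = fst (tp c1) \<longrightarrow> snd (tp c1) \<le> last (arm (the (h (r1,c1))))) \<and> ColD h d1 (r1,c1) (Some (tp d1))"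
      using trOK rowok cold by blast
    have d1': "dst (r1,c1) = d1" using p1 d1_def by simp
    have C': "(0 < Suc j \<and> dst (ol ! (Suc j - 1)) = d1) = True" using same by (simp add: d_def d1_def)
    show ?thesis unfolding p1 fst_conv snd_conv d1' by (simp only: C' if_True) (rule E)
  next
    case False
    have "dst (ol ! (Suc j - 1)) \<noteq> dst (ol ! Suc j)" using False by (simp add: d_def d1_def)
    moreover have "ColD h d1 (ol ! Suc j) None"
      unfolding ColD_def
    proof (intro allI impI)
      fix i assume a: "(i, d1) \<in> dom h \<and> (i, d1) \<noteq> ol ! Suc j \<and> arm (the (h (i, d1))) \<noteq> []"
      have "d < d1" using dd1 False by simp
      then show "case None of None \<Rightarrow> False | Some (\<rho>, q) \<Rightarrow> i \<le> \<rho> \<and> (i = \<rho> \<longrightarrow> (\<forall>a\<in>set (arm (the (h (i, d1)))). a \<le> q))"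
        using arms[of i d1] a kd by auto
    qed
    ultimately show ?thesis by (simp add: d1_def)
  qed
  show ?thesis unfolding PI_def prod.case
    using ss domh1 in1 arms1[unfolded d1_def] arm1 own1 prev1 by auto
qed

end


context proc begin

lemma PI_intro:
  assumes "snd cur = snd (ol!j) - s" "sst h" "dom h = D0 j - (if s = 0 then {} else {ol!j})" "cur \<in> dom h"
   "s = 0 \<longrightarrow> cur = ol!j"
   "\<forall>i jj. (i,jj) \<in> dom h \<longrightarrow> dst (ol!j) < jj \<longrightarrow> (i,jj) \<noteq> cur \<longrightarrow> arm (the (h (i,jj))) = []"
   "s = 0 \<longrightarrow> arm (the (h cur)) = []"
   "0 < s \<longrightarrow> arm (the (h cur)) \<noteq> [] \<and> (dst (ol!j) < snd cur \<longrightarrow> length (arm (the (h cur))) = 1)"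
   "\<exists>tr. OwnTr h (snd (ol!j)) cur s tr"
   "if 0 < j \<and> dst (ol!(j-1)) = dst (ol!j) then
        (\<exists>tp. TrOK h (dst (ol!j)) (snd cur) tp \<and> fst (tp (snd cur)) \<le> fst cur
           \<and> (0 < s \<and> fst cur = fst (tp (snd cur)) \<longrightarrow> snd (tp (snd cur)) \<le> last (arm (the (h cur))))
           \<and> ColD h (dst (ol!j)) cur (Some (tp (dst (ol!j)))))
      else ColD h (dst (ol!j)) cur None"
  shows "PI j s (h, cur)"
  using assms unfolding PI_def prod.case by (intro conjI) assumption+

lemma PI_step:
  assumes j: "j < length ol" and s: "s < F (ol!j)" and P: "PI j s (h, (\<sigma>,k))"
  shows "PI j (Suc s) (crowd_bump (h, (\<sigma>,k)))"
proof -
  define p0 where "p0 = ol!j"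
  define c0 where "c0 = snd p0"
  define d where "d = dst p0"
  have sk0: "p0 \<in> sk" using ol_nth_sk j p0_def by simp
  have Fb: "0 < F p0 \<and> F p0 \<le> c0 - 1" using F_bounds[of "fst p0" "snd p0"] sk0 by (simp add: c0_def)
  have dpos: "1 \<le> d" "d < c0" using dst_pos[OF sk0] by (auto simp: d_def c0_def)
  have P': "k = c0 - s \<and> sst h \<and> dom h = D0 j - (if s = 0 then {} else {p0}) \<and> (\<sigma>,k) \<in> dom h
   \<and> (s = 0 \<longrightarrow> (\<sigma>,k) = p0)
   \<and> (\<forall>i jj. (i,jj) \<in> dom h \<longrightarrow> d < jj \<longrightarrow> (i,jj) \<noteq> (\<sigma>,k) \<longrightarrow> arm (the (h (i,jj))) = [])
   \<and> (s = 0 \<longrightarrow> arm (the (h (\<sigma>,k))) = [])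
   \<and> (0 < s \<longrightarrow> arm (the (h (\<sigma>,k))) \<noteq> [] \<and> (d < k \<longrightarrow> length (arm (the (h (\<sigma>,k)))) = 1))
   \<and> (\<exists>tr. OwnTr h c0 (\<sigma>,k) s tr)"
    using P unfolding PI_def p0_def c0_def d_def by auto
  have kk: "k = c0 - s" and ss: "sst h" and domh: "dom h = D0 j - (if s = 0 then {} else {p0})"
    and curin: "(\<sigma>,k) \<in> dom h" and s0cur: "s = 0 \<Longrightarrow> (\<sigma>,k) = p0"
    and arms: "\<And>i jj. (i,jj) \<in> dom h \<Longrightarrow> d < jj \<Longrightarrow> (i,jj) \<noteq> (\<sigma>,k) \<Longrightarrow> arm (the (h (i,jj))) = []"
    and arm0: "s = 0 \<Longrightarrow> arm (the (h (\<sigma>,k))) = []"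
    and armpos: "0 < s \<Longrightarrow> arm (the (h (\<sigma>,k))) \<noteq> [] \<and> (d < k \<longrightarrow> length (arm (the (h (\<sigma>,k)))) = 1)"
    using P' by auto
  obtain tr where own: "OwnTr h c0 (\<sigma>,k) s tr" using P' by auto
  have dF: "d = c0 - F p0" by (simp add: d_def dst_def c0_def)
  have kd: "d < k" using kk dF s Fb p0_def by auto
  have k2: "2 \<le> k" using kd dpos by simp
  have k1ne: "k - 1 \<noteq> k" using k2 by arith
  have km1: "k - 1 = c0 - Suc s" using kk by simp
  have mode: "(arm (the (h (\<sigma>,k))) = [] \<and> (Suc \<sigma>, k) \<notin> dom h \<and> (\<sigma>, Suc k) \<notin> dom h)
               \<or> (\<exists>m. arm (the (h (\<sigma>,k))) = [m])"
  proof (cases "s = 0")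
    case True
    have p0e: "ol ! j = (\<sigma>,k)" using s0cur[OF True] p0_def by simp
    then show ?thesis using corner[OF j p0e] domh True arm0 by simp
  next
    case False
    then have "arm (the (h (\<sigma>,k))) \<noteq> []" "length (arm (the (h (\<sigma>,k)))) = 1" using armpos kd by auto
    then show ?thesis by (cases "arm (the (h (\<sigma>,k)))") auto
  qed
  interpret st: stp h \<sigma> k using ss curin k2 mode by unfold_locales
  let ?U = "the (h (\<sigma>,k))"
  let ?rr = "rnew h (\<sigma>,k)"
  let ?bb = "bval ?U"
  let ?qq = "qnew h (\<sigma>,k)"
  let ?V = "the (h (?rr, k - 1))"
  let ?hh = "fst (crowd_bump (h,(\<sigma>,k)))"
  have cbeq: "crowd_bump (h,(\<sigma>,k)) = (?hh, (?rr, k - 1))" using st.step_snd by (metis prod.collapse)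
  have s0arm: "arm ?U = [m] \<Longrightarrow> 0 < s" for m using arm0 by (cases s) auto
  define PC where "PC = (0 < j \<and> dst (ol!(j-1)) = d)"
  have prevP: "if PC then (\<exists>tp. TrOK h d k tp \<and> fst (tp k) \<le> \<sigma>
           \<and> (0 < s \<and> \<sigma> = fst (tp k) \<longrightarrow> snd (tp k) \<le> last (arm ?U))
           \<and> ColD h d (\<sigma>,k) (Some (tp d)))
      else ColD h d (\<sigma>,k) None"
    using P unfolding PI_def PC_def p0_def d_def prod.case fst_conv snd_conv by (elim conjE) assumption
  have cmp: "fst (tp (k-1)) \<le> ?rr \<and> (fst (tp (k-1)) = ?rr \<longrightarrow> snd (tp (k-1)) \<le> ?qq)"
    if tpP: "TrOK h d k tp" "fst (tp k) \<le> \<sigma>" "0 < s \<and> \<sigma> = fst (tp k) \<longrightarrow> snd (tp k) \<le> last (arm ?U)" for tp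
  proof -
    have tA: "\<And>jj. d \<le> jj \<Longrightarrow> jj \<le> k \<Longrightarrow> (fst (tp jj), jj) \<in> dom h"
      and tB: "\<And>jj. d < jj \<Longrightarrow> jj \<le> k \<Longrightarrow> snd (tp jj) \<in> set (ext_leg (the (h (fst (tp jj), jj))))"
      and tC: "\<And>jj. d \<le> jj \<Longrightarrow> jj < k \<Longrightarrow> snd (tp jj) \<le> snd (tp (Suc jj))"
      and tD: "snd (tp d) \<in> ent h (fst (tp d), d)"
      using tpP(1) unfolding TrOK_def by blast+
    have kk1: "d \<le> k - 1" "k - 1 \<le> k" "k - 1 < k" "Suc (k - 1) = k" "d \<le> k" using kd by arith+
    have T1: "(fst (tp k), k) \<in> dom h" using tA[OF kk1(5)] by blast
    have T2: "snd (tp k) \<in> set (ext_leg (the (h (fst (tp k), k))))" using tB[OF kd] by blast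
    have T3: "(fst (tp (k-1)), k - 1) \<in> dom h" using tA[OF kk1(1,2)] .
    have T4: "snd (tp (k-1)) \<le> snd (tp k)" using tC[OF kk1(1,3)] kk1(4) by metis
    have T5: "snd (tp (k-1)) \<in> ent h (fst (tp (k-1)), k - 1)"
    proof (cases "k - 1 = d")
      case True then show ?thesis using tD by metis
    next
      case False
      then have "d < k - 1" using kk1 by arith
      then have "snd (tp (k-1)) \<in> set (ext_leg (the (h (fst (tp (k-1)), k - 1))))"
        using tB kk1(2) by blast
      then show ?thesis using ext_leg_sub_hentries unfolding ent_def by blast
    qed
    have mq: "\<And>m. arm ?U = [m] \<Longrightarrow> fst (tp k) = \<sigma> \<Longrightarrow> snd (tp k) \<le> m"
      using tpP(3) s0arm by fastforce
    show ?thesis using st.compare[OF T1 tpP(2) T2 mq T3 T5 T4] by simp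
  qed
  have armok: "?rr \<noteq> \<sigma> \<Longrightarrow> \<forall>a\<in>set (arm ?V). a \<le> ?bb"
  proof -
    assume ne: "?rr \<noteq> \<sigma>"
    have qb: "?qq = ?bb" using st.q_cases ne by simp
    have cne: "(?rr, k - 1) \<noteq> (\<sigma>, k)" using k1ne by simp
    show ?thesis
    proof (cases "k - 1 = d")
      case False
      then have "arm ?V = []" using arms[OF st.rr_in] kd cne by simp
      then show ?thesis by simp
    next
      case True
      show ?thesis
      proof (cases PC)
        case pc: True
        then obtain tp where tpP: "TrOK h d k tp" "fst (tp k) \<le> \<sigma>"
            "0 < s \<and> \<sigma> = fst (tp k) \<longrightarrow> snd (tp k) \<le> last (arm ?U)" "ColD h d (\<sigma>,k) (Some (tp d))"
          using prevP by auto
        obtain \<rho> q where rq: "tp d = (\<rho>, q)" by (cases "tp d")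
        have c: "\<rho> \<le> ?rr" "\<rho> = ?rr \<Longrightarrow> q \<le> ?bb" using cmp[OF tpP(1-3)] True rq qb by auto
        show ?thesis
        proof (cases "arm ?V = []")
          case True then show ?thesis by simp
        next
          case False
          have "?rr \<le> \<rho> \<and> (?rr = \<rho> \<longrightarrow> (\<forall>a\<in>set (arm ?V). a \<le> q))"
            using tpP(4) st.rr_in \<open>k - 1 = d\<close> False kd rq unfolding ColD_def by fastforce
          then show ?thesis using c by fastforce
        qed
      next
        case False
        then have "ColD h d (\<sigma>,k) None" using prevP by simp
        then have "arm ?V = []" using st.rr_in True kd unfolding ColD_def by fastforce
        then show ?thesis by simp
      qed
    qed
  qed
  have sstH: "sst ?hh" using st.step_sst armok by blast
  obtain L' where hhA: "?hh (?rr, k - 1) = Some (Hook (hk ?V) L' (arm ?V @ [?qq]))" "set (leg ?V) \<subseteq> set L'"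
    using st.step_A by blast
  have hhAin: "(?rr, k - 1) \<in> dom ?hh" using hhA by auto
  have hhA_arm: "arm (the (?hh (?rr, k - 1))) = arm ?V @ [?qq]" using hhA by simp
  have cne: "(?rr, k - 1) \<noteq> (\<sigma>, k)" using k1ne by simp
  have grow_ext: "p \<noteq> (\<sigma>,k) \<Longrightarrow> set (ext_leg (the (h p))) \<subseteq> set (ext_leg (the (?hh p)))" for p
  proof -
    assume pn: "p \<noteq> (\<sigma>,k)"
    show ?thesis
    proof (cases "p = (?rr, k - 1)")
      case True then show ?thesis using hhA by (auto simp: ext_leg_def)
    next
      case False then show ?thesis using st.step_other[OF pn False] by simp
    qed
  qed
  have grow_ent: "p \<noteq> (\<sigma>,k) \<Longrightarrow> ent h p \<subseteq> ent ?hh p" for p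
  proof -
    assume pn: "p \<noteq> (\<sigma>,k)"
    show ?thesis
    proof (cases "p = (?rr, k - 1)")
      case True then show ?thesis using hhA by (auto simp: ent_def hentries_def)
    next
      case False then show ?thesis using st.step_other[OF pn False] by (simp add: ent_def)
    qed
  qed
  have dom_same: "p \<noteq> (\<sigma>,k) \<Longrightarrow> p \<in> dom ?hh \<longleftrightarrow> p \<in> dom h" for p
    using st.step_dom by auto
  have same_other: "p \<noteq> (\<sigma>,k) \<Longrightarrow> p \<noteq> (?rr, k - 1) \<Longrightarrow> ?hh p = h p" for p using st.step_other by blast
  have c3: "dom ?hh = D0 j - {p0}"
  proof (cases "s = 0")
    case True
    then show ?thesis using st.step_dom arm0 domh s0cur by simp
  next
    case False
    then show ?thesis using st.step_dom armpos domh by simp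
  qed
  have c6: "\<forall>i jj. (i,jj) \<in> dom ?hh \<longrightarrow> d < jj \<longrightarrow> (i,jj) \<noteq> (?rr, k - 1) \<longrightarrow> arm (the (?hh (i,jj))) = []"
  proof (intro allI impI)
    fix i jj assume a: "(i,jj) \<in> dom ?hh" "d < jj" "(i,jj) \<noteq> (?rr, k - 1)"
    show "arm (the (?hh (i,jj))) = []"
    proof (cases "(i,jj) = (\<sigma>,k)")
      case True
      show ?thesis
      proof (cases "arm ?U = []")
        case a0: True
        then have "?hh (\<sigma>,k) = None" using st.step_S_removed by simp
        then show ?thesis using a True by auto
      next
        case False
        then obtain m where "arm ?U = [m]" using mode by auto
        then show ?thesis using st.step_M_cell True by auto
      qed
    next
      case False
      then show ?thesis using same_other[OF False a(3)] dom_same[OF False] a arms by simp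
    qed
  qed
  have c8: "arm (the (?hh (?rr, k - 1))) \<noteq> [] \<and> (d < k - 1 \<longrightarrow> length (arm (the (?hh (?rr, k - 1)))) = 1)"
  proof -
    have "d < k - 1 \<Longrightarrow> arm ?V = []" using arms[OF st.rr_in] cne by simp
    then show ?thesis using hhA_arm by simp
  qed
  define tr' where "tr' = tr(k - 1 := (?rr, ?qq))"
  have c9a: "tr' (snd (?rr, k - 1)) = (fst (?rr, k - 1), last (arm (the (?hh (?rr, k - 1)))))"
    using hhA_arm by (simp add: tr'_def)
  have c9b: "(fst (tr' jj), jj) \<in> dom ?hh \<and> snd (tr' jj) \<in> set (ext_leg (the (?hh (fst (tr' jj), jj))))"
    if a: "snd (?rr, k - 1) < jj \<and> jj < c0" for jj
  proof (cases "jj = k")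
    case True
    then have sp: "0 < s" using a kk by arith
    then obtain m where m: "arm ?U = [m]" using armpos kd by (cases "arm ?U") auto
    have trk: "tr k = (\<sigma>, m)" using own sp m unfolding OwnTr_def by simp
    obtain U' where U': "?hh (\<sigma>,k) = Some U'" "arm U' = []" "m \<in> set (ext_leg U')" using st.step_M_cell[OF m] by blast
    have "k \<noteq> k - 1" using k1ne by simp
    then show ?thesis using True trk U' by (simp add: tr'_def domIff)
  next
    case False
    then have jk: "k < jj" "jj \<noteq> k - 1" using a by auto
    have old: "(fst (tr jj), jj) \<in> dom h \<and> snd (tr jj) \<in> set (ext_leg (the (h (fst (tr jj), jj))))"
      using own jk a unfolding OwnTr_def by simp
    have n1: "(fst (tr jj), jj) \<noteq> (\<sigma>,k)" "(fst (tr jj), jj) \<noteq> (?rr, k - 1)" using jk by auto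
    show ?thesis using old same_other[OF n1] dom_same[OF n1(1)] jk by (simp add: tr'_def)
  qed
  have c9c: "snd (tr' jj) \<le> snd (tr' (Suc jj))" if a: "snd (?rr, k - 1) \<le> jj \<and> Suc jj < c0" for jj
  proof (cases "jj = k - 1")
    case True
    then have sp: "0 < s" using a kk k2 by arith
    then obtain m where m: "arm ?U = [m]" using armpos kd by (cases "arm ?U") auto
    have trk: "tr k = (\<sigma>, m)" using own sp m unfolding OwnTr_def by simp
    have sj: "Suc jj = k" using True k2 by arith
    have "snd (tr' (Suc jj)) = m" using sj trk k1ne by (simp add: tr'_def)
    moreover have "snd (tr' jj) = ?qq" using True by (simp add: tr'_def)
    ultimately show ?thesis using st.step_q_le_m[OF m] by simp
  next
    case False
    have "k - 1 \<le> jj" using a by simp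
    then have kj: "k \<le> jj" using False k2 by arith
    have "snd (tr jj) \<le> snd (tr (Suc jj))" using own a kj unfolding OwnTr_def by auto
    moreover have "Suc jj \<noteq> k - 1" using kj by simp
    ultimately show ?thesis using False by (simp add: tr'_def)
  qed
  have c9: "OwnTr ?hh c0 (?rr, k - 1) (Suc s) tr'"
    unfolding OwnTr_def using c9a c9b c9c by blast
  have c10: "if PC then (\<exists>tp. TrOK ?hh d (k - 1) tp \<and> fst (tp (k - 1)) \<le> ?rr
           \<and> (0 < Suc s \<and> ?rr = fst (tp (k - 1)) \<longrightarrow> snd (tp (k - 1)) \<le> last (arm (the (?hh (?rr, k - 1)))))
           \<and> ColD ?hh d (?rr, k - 1) (Some (tp d)))
      else ColD ?hh d (?rr, k - 1) None"
  proof (cases PC)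
    case pc: True
    then obtain tp where tpP: "TrOK h d k tp" "fst (tp k) \<le> \<sigma>"
        "0 < s \<and> \<sigma> = fst (tp k) \<longrightarrow> snd (tp k) \<le> last (arm ?U)" "ColD h d (\<sigma>,k) (Some (tp d))"
      using prevP by auto
    have cm: "fst (tp (k-1)) \<le> ?rr" "fst (tp (k-1)) = ?rr \<Longrightarrow> snd (tp (k-1)) \<le> ?qq" using cmp[OF tpP(1-3)] by auto
    have tA: "\<And>jj. d \<le> jj \<Longrightarrow> jj \<le> k \<Longrightarrow> (fst (tp jj), jj) \<in> dom h"
      and tB: "\<And>jj. d < jj \<Longrightarrow> jj \<le> k \<Longrightarrow> snd (tp jj) \<in> set (ext_leg (the (h (fst (tp jj), jj))))"
      and tC: "\<And>jj. d \<le> jj \<Longrightarrow> jj < k \<Longrightarrow> snd (tp jj) \<le> snd (tp (Suc jj))"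
      and tD: "snd (tp d) \<in> ent h (fst (tp d), d)"
      using tpP(1) unfolding TrOK_def by blast+
    have tok: "TrOK ?hh d (k - 1) tp"
      unfolding TrOK_def
    proof (intro conjI allI impI)
      fix jj assume a: "d \<le> jj \<and> jj \<le> k - 1"
      then have jk: "jj \<le> k" "jj \<noteq> k" using k2 by arith+
      then have n: "(fst (tp jj), jj) \<noteq> (\<sigma>,k)" by simp
      have "(fst (tp jj), jj) \<in> dom h" using tA a jk by blast
      then show "(fst (tp jj), jj) \<in> dom ?hh" using dom_same[OF n] by simp
    next
      fix jj assume a: "d < jj \<and> jj \<le> k - 1"
      then have jk: "jj \<le> k" "jj \<noteq> k" using k2 by arith+
      then have n: "(fst (tp jj), jj) \<noteq> (\<sigma>,k)" by simp
      have "snd (tp jj) \<in> set (ext_leg (the (h (fst (tp jj), jj))))" using tB a jk by blast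
      then show "snd (tp jj) \<in> set (ext_leg (the (?hh (fst (tp jj), jj))))" using grow_ext[OF n] by blast
    next
      fix jj assume a: "d \<le> jj \<and> jj < k - 1"
      then have "jj < k" by arith
      then show "snd (tp jj) \<le> snd (tp (Suc jj))" using tC a by blast
    next
      have n: "(fst (tp d), d) \<noteq> (\<sigma>,k)" using kd by auto
      show "snd (tp d) \<in> ent ?hh (fst (tp d), d)" using grow_ent[OF n] tD by blast
    qed
    have cd: "ColD ?hh d (?rr, k - 1) (Some (tp d))"
      unfolding ColD_def
    proof (intro allI impI)
      fix i assume a: "(i, d) \<in> dom ?hh \<and> (i, d) \<noteq> (?rr, k - 1) \<and> arm (the (?hh (i, d))) \<noteq> []"
      have n: "(i,d) \<noteq> (\<sigma>,k)" using kd by auto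
      have e: "?hh (i,d) = h (i,d)" using same_other[OF n] a by simp
      have "(i,d) \<in> dom h" using dom_same[OF n] a by simp
      then show "case Some (tp d) of None \<Rightarrow> False | Some (\<rho>, q) \<Rightarrow> i \<le> \<rho> \<and> (i = \<rho> \<longrightarrow> (\<forall>a\<in>set (arm (the (?hh (i, d)))). a \<le> q))"
        using tpP(4) a n e unfolding ColD_def by auto
    qed
    show ?thesis using pc tok cm cd hhA_arm by auto
  next
    case npc: False
    then have cd0: "ColD h d (\<sigma>,k) None" using prevP by simp
    have "ColD ?hh d (?rr, k - 1) None"
      unfolding ColD_def
    proof (intro allI impI)
      fix i assume a: "(i, d) \<in> dom ?hh \<and> (i, d) \<noteq> (?rr, k - 1) \<and> arm (the (?hh (i, d))) \<noteq> []"
      have n: "(i,d) \<noteq> (\<sigma>,k)" using kd by auto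
      have e: "?hh (i,d) = h (i,d)" using same_other[OF n] a by simp
      have "(i,d) \<in> dom h" using dom_same[OF n] a by simp
      then show "case None of None \<Rightarrow> False | Some (\<rho>, q) \<Rightarrow> i \<le> \<rho> \<and> (i = \<rho> \<longrightarrow> (\<forall>a\<in>set (arm (the (?hh (i, d)))). a \<le> q))"
        using cd0 a n e unfolding ColD_def by auto
    qed
    then show ?thesis using npc by simp
  qed
  have X: "PI j (Suc s) (?hh, (?rr, k - 1))"
  proof (rule PI_intro)
    show "snd (?rr, k - 1) = snd (ol ! j) - Suc s" using km1 by (simp add: c0_def p0_def)
    show "sst ?hh" by (rule sstH)
    show "dom ?hh = D0 j - (if Suc s = 0 then {} else {ol ! j})" using c3 by (simp add: p0_def)
    show "(?rr, k - 1) \<in> dom ?hh" by (rule hhAin)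
    show "Suc s = 0 \<longrightarrow> (?rr, k - 1) = ol ! j" by simp
    show "\<forall>i jj. (i, jj) \<in> dom ?hh \<longrightarrow> dst (ol ! j) < jj \<longrightarrow> (i, jj) \<noteq> (?rr, k - 1) \<longrightarrow> arm (the (?hh (i, jj))) = []"
      using c6 unfolding d_def p0_def .
    show "Suc s = 0 \<longrightarrow> arm (the (?hh (?rr, k - 1))) = []" by simp
    show "0 < Suc s \<longrightarrow> arm (the (?hh (?rr, k - 1))) \<noteq> [] \<and> (dst (ol ! j) < snd (?rr, k - 1) \<longrightarrow> length (arm (the (?hh (?rr, k - 1)))) = 1)"
      using c8 unfolding d_def p0_def snd_conv by simp
    show "\<exists>tr. OwnTr ?hh (snd (ol ! j)) (?rr, k - 1) (Suc s) tr" using c9 unfolding c0_def p0_def by blast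
    show "if 0 < j \<and> dst (ol ! (j - 1)) = dst (ol ! j)
        then \<exists>tp. TrOK ?hh (dst (ol ! j)) (snd (?rr, k - 1)) tp \<and> fst (tp (snd (?rr, k - 1))) \<le> fst (?rr, k - 1) \<and>
             (0 < Suc s \<and> fst (?rr, k - 1) = fst (tp (snd (?rr, k - 1))) \<longrightarrow> snd (tp (snd (?rr, k - 1))) \<le> last (arm (the (?hh (?rr, k - 1))))) \<and>
             ColD ?hh (dst (ol ! j)) (?rr, k - 1) (Some (tp (dst (ol ! j))))
        else ColD ?hh (dst (ol ! j)) (?rr, k - 1) None"
      unfolding fst_conv snd_conv using c10 unfolding PC_def d_def p0_def .
  qed
  show ?thesis using X cbeq by metis
qed

end


context proc begin

lemma PI_step': "j < length ol \<Longrightarrow> s < F (ol!j) \<Longrightarrow> PI j s st \<Longrightarrow> PI j (Suc s) (crowd_bump st)"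
  using PI_step by (cases st) (metis prod.collapse)

lemma PI_run: "j < length ol \<Longrightarrow> PI j 0 (x, ol!j) \<Longrightarrow> s \<le> F (ol!j) \<Longrightarrow> PI j s ((crowd_bump^^s) (x, ol!j))"
proof (induction s)
  case 0 then show ?case by simp
next
  case (Suc s)
  then have "PI j s ((crowd_bump^^s) (x, ol!j))" by simp
  then show ?case using PI_step'[OF Suc.prems(1)] Suc.prems(3) by simp
qed

lemma PI_all: "j < length ol \<Longrightarrow> s \<le> F (ol!j) \<Longrightarrow> PI j s ((crowd_bump^^s) (T_start S ol F j, ol!j))"
proof (induction j arbitrary: s)
  case 0
  have "PI 0 0 (S, ol!0)" using PI_start0 0 by simp
  then show ?case using PI_run 0 by simp
next
  case (Suc j)
  have "PI j (F (ol!j)) ((crowd_bump^^(F (ol!j))) (T_start S ol F j, ol!j))" using Suc.IH Suc.prems by simp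
  then have "PI (Suc j) 0 (fst ((crowd_bump^^(F (ol!j))) (T_start S ol F j, ol!j)), ol ! Suc j)"
    using PI_next Suc.prems(1) by (metis prod.collapse)
  then have "PI (Suc j) 0 (T_start S ol F (Suc j), ol ! Suc j)" by simp
  then show ?case using PI_run Suc.prems by simp
qed

theorem main: "\<forall>j < card sk. \<forall>s < F (ol ! j). is_hvt (T_seq S ol F j (Suc s))"
proof (intro allI impI)
  fix j s assume j: "j < card sk" and s: "s < F (ol ! j)"
  have "PI j (Suc s) ((crowd_bump^^(Suc s)) (T_start S ol F j, ol!j))"
  proof (rule PI_all)
    show "j < length ol" using j ol_len by simp
    show "Suc s \<le> F (ol ! j)" using s by simp
  qed
  then have "sst (fst ((crowd_bump^^(Suc s)) (T_start S ol F j, ol!j)))"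
    using PI_sst by (metis prod.collapse)
  then show "is_hvt (T_seq S ol F j (Suc s))" unfolding T_seq_def using sst_is_hvt by blast
qed

end

theorem proposition3p27:
  fixes mu lam :: "nat list" and S :: hvt and F :: "cell \<Rightarrow> nat"
  assumes "partition mu" and "partition lam"
    and "length lam = length mu"
    and "\<forall>i < length mu. lam ! i \<le> mu ! i"
    and "set_valued_of_shape mu S"
    and "col_flagged_incr mu lam F"
  shows "\<forall>j < card (skew mu lam). \<forall>s < F (crowding_order mu lam F ! j).
           is_hvt (T_seq S (crowding_order mu lam F) F j (Suc s))"
proof -
  interpret proc mu lam S F using assms by unfold_locales
  show ?thesis using main .
qed


end
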